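(* Consider the following two-party game. Alice and Bob share a two-qubit state $\rho$ on $\mathbb{C}^2\otimes\mathbb{C}^2$. For each $x=x_1x_2x_3\in\{0,1\}^3$, Alice applies a completely positive trace-preserving map $\Lambda_x$ to her qubit (the first tensor factor), producing $\rho_x=(\Lambda_x\otimes\mathrm{id})(\rho)$, and sends her qubit to Bob. For each $y\in\{1,2,3\}$, Bob performs a two-outcome projective measurement $\{\Pi_y^0,\Pi_y^1\}$ on the whole two-qubit system. The success probability is $$\mathcal{S}_Q=\frac{1}{24}\sum_{y=1}^{3}\sum_{x\in\{0,1\}^3}\mathrm{Tr}\big[\rho_x\,\Pi_y^{x_y}\big].$$ Then the maximum of $\mathcal{S}_Q$ over all shared two-qubit states $\rho$, all choices of maps $\Lambda_x$ and all projective measurements $\{\Pi_y^b\}$ equals $\mathcal{S}_Q^{opt}=\frac{1}{2}+\frac{1}{\sqrt{6}}\approx 0.908$.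
   Context: This is the "3-bit variant of prepare-measure random access code": Bob's goal on input $y$ is to output the $y$-th bit $x_y$ of Alice's input string $x$. *)

theory Defs
  imports Complex_Main "Jordan_Normal_Form.Matrix"
begin

text \<open>Matrices are complex JNF matrices; vectors of C^n are functions nat => complex on indices < n.\<close>

definition mtrace :: "complex mat \<Rightarrow> complex" where
  "mtrace A = (\<Sum>i<dim_row A. A $$ (i, i))"

definition hermitian_n :: "nat \<Rightarrow> complex mat \<Rightarrow> bool" where
  "hermitian_n n A \<longleftrightarrow> A \<in> carrier_mat n n \<and>
     (\<forall>i<n. \<forall>j<n. A $$ (i, j) = cnj (A $$ (j, i)))"

definition psd :: "nat \<Rightarrow> complex mat \<Rightarrow> bool" where
  "psd n A \<longleftrightarrow> hermitian_n n A \<and>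
     (\<forall>v :: nat \<Rightarrow> complex. 0 \<le> Re (\<Sum>i<n. \<Sum>j<n. cnj (v i) * A $$ (i, j) * v j))"

definition density :: "nat \<Rightarrow> complex mat \<Rightarrow> bool" where
  "density n A \<longleftrightarrow> psd n A \<and> mtrace A = 1"

text \<open>(Lambda \<otimes> id_k) applied to a (2k) x (2k) matrix, the qubit being the FIRST tensor factor:
  basis index of |i> \<otimes> |a> is i*k + a.\<close>
definition ampl :: "(complex mat \<Rightarrow> complex mat) \<Rightarrow> nat \<Rightarrow> complex mat \<Rightarrow> complex mat" where
  "ampl \<Lambda> k M = mat (2*k) (2*k) (\<lambda>(r, s).
      \<Lambda> (mat 2 2 (\<lambda>(i, j). M $$ (i*k + r mod k, j*k + s mod k))) $$ (r div k, s div k))"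

definition qubit_linear :: "(complex mat \<Rightarrow> complex mat) \<Rightarrow> bool" where
  "qubit_linear \<Lambda> \<longleftrightarrow>
     (\<forall>A \<in> carrier_mat 2 2. \<Lambda> A \<in> carrier_mat 2 2) \<and>
     (\<forall>A \<in> carrier_mat 2 2. \<forall>B \<in> carrier_mat 2 2. \<Lambda> (A + B) = \<Lambda> A + \<Lambda> B) \<and>
     (\<forall>A \<in> carrier_mat 2 2. \<forall>c. \<Lambda> (c \<cdot>\<^sub>m A) = c \<cdot>\<^sub>m \<Lambda> A)"

definition completely_positive :: "(complex mat \<Rightarrow> complex mat) \<Rightarrow> bool" where
  "completely_positive \<Lambda> \<longleftrightarrow> (\<forall>k M. psd (2*k) M \<longrightarrow> psd (2*k) (ampl \<Lambda> k M))"

definition trace_preserving :: "(complex mat \<Rightarrow> complex mat) \<Rightarrow> bool" where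
  "trace_preserving \<Lambda> \<longleftrightarrow> (\<forall>A \<in> carrier_mat 2 2. mtrace (\<Lambda> A) = mtrace A)"

definition cptp :: "(complex mat \<Rightarrow> complex mat) \<Rightarrow> bool" where
  "cptp \<Lambda> \<longleftrightarrow> qubit_linear \<Lambda> \<and> completely_positive \<Lambda> \<and> trace_preserving \<Lambda>"

definition projector :: "nat \<Rightarrow> complex mat \<Rightarrow> bool" where
  "projector n P \<longleftrightarrow> hermitian_n n P \<and> P * P = P"

text \<open>Two-outcome projective measurement {P False, P True} on C^n (False = outcome 0).\<close>
definition proj_meas :: "nat \<Rightarrow> (bool \<Rightarrow> complex mat) \<Rightarrow> bool" where
  "proj_meas n P \<longleftrightarrow> projector n (P False) \<and> projector n (P True) \<and> P False + P True = 1\<^sub>m n"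

text \<open>Success probability of the 3-to-1 RAC.  x in {0,1}^3 is a bool list of length 3
  (x_y = x ! (y-1)), y ranges over {1,2,3}.\<close>
definition success :: "complex mat \<Rightarrow> (bool list \<Rightarrow> complex mat \<Rightarrow> complex mat)
     \<Rightarrow> (nat \<Rightarrow> bool \<Rightarrow> complex mat) \<Rightarrow> real" where
  "success \<rho> \<Lambda> Pm = (1/24) * (\<Sum>y\<in>{1..3::nat}. \<Sum>x\<in>{xs::bool list. length xs = 3}.
       Re (mtrace (ampl (\<Lambda> x) 2 \<rho> * Pm y (x ! (y - 1)))))"

definition valid_strategy :: "complex mat \<Rightarrow> (bool list \<Rightarrow> complex mat \<Rightarrow> complex mat)
     \<Rightarrow> (nat \<Rightarrow> bool \<Rightarrow> complex mat) \<Rightarrow> bool" where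
  "valid_strategy \<rho> \<Lambda> Pm \<longleftrightarrow> density 4 \<rho> \<and>
     (\<forall>x. length x = 3 \<longrightarrow> cptp (\<Lambda> x)) \<and> (\<forall>y\<in>{1..3::nat}. proj_meas 4 (Pm y))"

end

theory Submission
  imports Defs
begin

definition psdf :: "nat \<Rightarrow> (nat \<Rightarrow> nat \<Rightarrow> complex) \<Rightarrow> bool" where
  "psdf n f \<longleftrightarrow> (\<forall>i<n. \<forall>j<n. f i j = cnj (f j i)) \<and>
     (\<forall>v. 0 \<le> Re (\<Sum>i<n. \<Sum>j<n. cnj (v i) * f i j * v j))"

lemma psdf_herm: "psdf n f \<Longrightarrow> i < n \<Longrightarrow> j < n \<Longrightarrow> f i j = cnj (f j i)"
  unfolding psdf_def by blast

lemma psdf_form: "psdf n f \<Longrightarrow> 0 \<le> Re (\<Sum>i<n. \<Sum>j<n. cnj (v i) * f i j * v j)"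
  unfolding psdf_def by blast

lemma sum_delta_nat: "i < n \<Longrightarrow> (\<Sum>j<n. (if j = i then a else 0) * h j) = a * h i" for h :: "nat \<Rightarrow> complex"
proof -
  assume "i < n"
  have "(\<Sum>j<n. (if j = i then a else 0) * h j) = (\<Sum>j<n. if j = i then a * h j else 0)"
    by (rule sum.cong) auto
  also have "\<dots> = a * h i" using \<open>i<n\<close> by (simp add: sum.delta')
  finally show ?thesis .
qed

lemma sum_delta_nat': "i < n \<Longrightarrow> (\<Sum>j<n. h j * (if j = i then a else 0)) = h i * a" for h :: "nat \<Rightarrow> complex"
  using sum_delta_nat[of i n a h] by (simp add: mult.commute)

lemma two_form:
  fixes f :: "nat \<Rightarrow> nat \<Rightarrow> complex"
  assumes "i < n" "j < n" "i \<noteq> j"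
  shows "(\<Sum>l<n. \<Sum>m<n. cnj ((\<lambda>l. (if l = i then a else 0) + (if l = j then b else 0)) l) * f l m *
           ((\<lambda>l. (if l = i then a else 0) + (if l = j then b else 0)) m))
        = cnj a * f i i * a + cnj a * f i j * b + cnj b * f j i * a + cnj b * f j j * b"
proof -
  have e: "\<And>l. (\<Sum>m<n. cnj ((if l = i then a else 0) + (if l = j then b else 0)) * f l m *
           ((if m = i then a else 0) + (if m = j then b else 0))) =
          cnj ((if l = i then a else 0) + (if l = j then b else 0)) * (f l i * a + f l j * b)"
  proof -
    fix l
    have "(\<Sum>m<n. cnj ((if l = i then a else 0) + (if l = j then b else 0)) * f l m *
           ((if m = i then a else 0) + (if m = j then b else 0))) =
          cnj ((if l = i then a else 0) + (if l = j then b else 0)) *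
          ((\<Sum>m<n. f l m * (if m = i then a else 0)) + (\<Sum>m<n. f l m * (if m = j then b else 0)))"
      by (simp add: sum_distrib_left sum.distrib algebra_simps)
    also have "\<dots> = cnj ((if l = i then a else 0) + (if l = j then b else 0)) * (f l i * a + f l j * b)"
      using assms by (simp add: sum_delta_nat')
    finally show "?thesis l" .
  qed
  have "(\<Sum>l<n. cnj ((if l = i then a else 0) + (if l = j then b else 0)) * (f l i * a + f l j * b))
     = (\<Sum>l<n. (if l = i then cnj a else 0) * (f l i * a + f l j * b)) +
       (\<Sum>l<n. (if l = j then cnj b else 0) * (f l i * a + f l j * b))"
    unfolding sum.distrib[symmetric] by (rule sum.cong) (auto simp: algebra_simps)
  also have "\<dots> = cnj a * (f i i * a + f i j * b) + cnj b * (f j i * a + f j j * b)"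
    using assms by (simp add: sum_delta_nat)
  finally show ?thesis using e by (simp add: algebra_simps)
qed

lemma one_form:
  fixes f :: "nat \<Rightarrow> nat \<Rightarrow> complex"
  assumes "i < n"
  shows "(\<Sum>l<n. \<Sum>m<n. cnj (if l = i then 1 else 0) * f l m * (if m = i then 1 else 0)) = f i i"
proof -
  have "(\<Sum>l<n. \<Sum>m<n. cnj (if l = i then 1 else 0) * f l m * (if m = i then 1 else 0))
      = (\<Sum>l<n. (if l = i then 1 else 0) * (\<Sum>m<n. f l m * (if m = i then 1 else 0)))"
    by (rule sum.cong) (auto simp: sum_distrib_left algebra_simps)
  also have "\<dots> = (\<Sum>l<n. (if l = i then 1 else 0) * f l i)"
    using assms by (simp add: sum_delta_nat')
  also have "\<dots> = f i i" using assms by (simp add: sum_delta_nat)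
  finally show ?thesis .
qed

lemma psdf_diag:
  assumes "psdf n f" "i < n"
  shows "Im (f i i) = 0" "0 \<le> Re (f i i)" "f i i = complex_of_real (Re (f i i))"
proof -
  have "f i i = cnj (f i i)" using psdf_herm[OF assms(1) assms(2) assms(2)] .
  then show im: "Im (f i i) = 0" by (metis cnj.sel(2) neg_equal_zero)
  then show "f i i = complex_of_real (Re (f i i))" by (simp add: complex_eq_iff)
  show "0 \<le> Re (f i i)"
    using psdf_form[OF assms(1), of "\<lambda>l. if l = i then 1 else 0"] one_form[OF assms(2), of f] by simp
qed

lemma Qexp:
  "Re (cnj a * complex_of_real d1 * a + cnj a * z * b + cnj b * cnj z * a + cnj b * complex_of_real d2 * b)
   = d1 * (cmod a)^2 + d2 * (cmod b)^2 + 2 * Re (cnj a * z * b)"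
proof -
  have "cnj b * cnj z * a = cnj (cnj a * z * b)" by simp
  moreover have "Re (cnj a * complex_of_real d1 * a) = d1 * (cmod a)^2"
    unfolding cmod_power2 by (simp add: power2_eq_square algebra_simps)
  moreover have "Re (cnj b * complex_of_real d2 * b) = d2 * (cmod b)^2"
    unfolding cmod_power2 by (simp add: power2_eq_square algebra_simps)
  ultimately show ?thesis by (simp add: algebra_simps)
qed

lemma Re_rzz: "Re (complex_of_real r * z * cnj z) = r * (cmod z)^2"
  unfolding cmod_power2 by (simp add: power2_eq_square algebra_simps)

lemma psdf_offdiag:
  assumes "psdf n f" "i < n" "j < n"
  shows "(cmod (f i j))^2 \<le> Re (f i i) * Re (f j j)"
proof (cases "i = j")
  case True
  then show ?thesis using psdf_diag[OF assms(1) assms(2)] by (simp add: cmod_power2, simp add: power2_eq_square)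
next
  case ne: False
  define z where "z = f i j"
  define d1 where "d1 = Re (f i i)"
  define d2 where "d2 = Re (f j j)"
  have fii: "f i i = complex_of_real d1" using psdf_diag(3)[OF assms(1) assms(2)] d1_def by simp
  have fjj: "f j j = complex_of_real d2" using psdf_diag(3)[OF assms(1) assms(3)] d2_def by simp
  have fji: "f j i = cnj z" using psdf_herm[OF assms(1) assms(3) assms(2)] z_def by simp
  have d1: "0 \<le> d1" using psdf_diag(2)[OF assms(1) assms(2)] d1_def by simp
  have d2: "0 \<le> d2" using psdf_diag(2)[OF assms(1) assms(3)] d2_def by simp
  have Q: "\<And>a b. 0 \<le> d1 * (cmod a)^2 + d2 * (cmod b)^2 + 2 * Re (cnj a * z * b)"
  proof -
    fix a b
    have "0 \<le> Re (cnj a * f i i * a + cnj a * f i j * b + cnj b * f j i * a + cnj b * f j j * b)"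
      using psdf_form[OF assms(1), of "\<lambda>l. (if l = i then a else 0) + (if l = j then b else 0)"]
      unfolding two_form[OF assms(2) assms(3) ne, of a b f] .
    then show "0 \<le> d1 * (cmod a)^2 + d2 * (cmod b)^2 + 2 * Re (cnj a * z * b)"
      unfolding fii fjj fji z_def[symmetric] Qexp .
  qed
  show ?thesis
  proof (cases "d2 = 0")
    case False
    then have d2p: "0 < d2" using d2 by simp
    have "0 \<le> d1 * (cmod (complex_of_real d2))^2 + d2 * (cmod (- cnj z))^2 + 2 * Re (cnj (complex_of_real d2) * z * (- cnj z))"
      by (rule Q)
    also have "\<dots> = d1 * d2^2 + d2 * (cmod z)^2 - 2 * (d2 * (cmod z)^2)"
      using Re_rzz[of d2 z] d2 by (simp add: power2_eq_square)
    also have "\<dots> = d2 * (d1 * d2 - (cmod z)^2)" by (simp add: power2_eq_square algebra_simps)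
    finally have "0 \<le> d1 * d2 - (cmod z)^2" using d2p by (simp add: zero_le_mult_iff)
    then show ?thesis unfolding z_def d1_def d2_def by simp
  next
    case True
    have "z = 0"
    proof (rule ccontr)
      assume "z \<noteq> 0"
      then have zp: "0 < (cmod z)^2" by simp
      define t where "t = (d1 + 1) / (2 * (cmod z)^2)"
      have "0 \<le> d1 * (cmod 1)^2 + d2 * (cmod (- complex_of_real t * cnj z))^2 + 2 * Re (cnj 1 * z * (- complex_of_real t * cnj z))"
        by (rule Q)
      also have "\<dots> = d1 - 2 * (t * (cmod z)^2)"
      proof -
        have "Re (cnj 1 * z * (- complex_of_real t * cnj z)) = - (t * (cmod z)^2)"
          unfolding cmod_power2 by (simp add: power2_eq_square algebra_simps)
        then show ?thesis using True by simp
      qed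
      also have "\<dots> = -1" unfolding t_def using zp by (simp add: field_simps)
      finally show False by simp
    qed
    then show ?thesis using d1 d2 unfolding z_def d1_def d2_def by simp
  qed
qed

lemma form_shift:
  fixes g :: "nat \<Rightarrow> nat \<Rightarrow> complex"
  assumes "m < n"
  shows "(\<Sum>i<n. \<Sum>j<n. cnj (v i - (if i = m then \<alpha> else 0)) * g i j * (v j - (if j = m then \<alpha> else 0)))
       = (\<Sum>i<n. \<Sum>j<n. cnj (v i) * g i j * v j) - \<alpha> * (\<Sum>i<n. cnj (v i) * g i m)
         - cnj \<alpha> * (\<Sum>j<n. g m j * v j) + cnj \<alpha> * \<alpha> * g m m"
proof -
  have inner: "\<And>i. (\<Sum>j<n. cnj (v i - (if i = m then \<alpha> else 0)) * g i j * (v j - (if j = m then \<alpha> else 0)))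
     = (\<Sum>j<n. cnj (v i) * g i j * v j) - cnj (v i) * g i m * \<alpha>
       - (if i = m then cnj \<alpha> else 0) * (\<Sum>j<n. g i j * v j) + (if i = m then cnj \<alpha> else 0) * g i m * \<alpha>"
  proof -
    fix i
    have "(\<Sum>j<n. cnj (v i - (if i = m then \<alpha> else 0)) * g i j * (v j - (if j = m then \<alpha> else 0)))
       = (\<Sum>j<n. cnj (v i) * g i j * v j - (cnj (v i) * g i j) * (if j = m then \<alpha> else 0)
          - (if i = m then cnj \<alpha> else 0) * (g i j * v j) + ((if i = m then cnj \<alpha> else 0) * g i j) * (if j = m then \<alpha> else 0))"
      by (rule sum.cong) (auto simp: algebra_simps)
    also have "\<dots> = (\<Sum>j<n. cnj (v i) * g i j * v j) - (\<Sum>j<n. (cnj (v i) * g i j) * (if j = m then \<alpha> else 0))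
          - (if i = m then cnj \<alpha> else 0) * (\<Sum>j<n. g i j * v j) + (\<Sum>j<n. ((if i = m then cnj \<alpha> else 0) * g i j) * (if j = m then \<alpha> else 0))"
      by (simp add: sum.distrib sum_subtractf sum_distrib_left)
    also have "\<dots> = (\<Sum>j<n. cnj (v i) * g i j * v j) - cnj (v i) * g i m * \<alpha>
       - (if i = m then cnj \<alpha> else 0) * (\<Sum>j<n. g i j * v j) + (if i = m then cnj \<alpha> else 0) * g i m * \<alpha>"
      using assms by (simp only: sum_delta_nat'[OF assms])
    finally show "?thesis i" .
  qed
  have "(\<Sum>i<n. \<Sum>j<n. cnj (v i - (if i = m then \<alpha> else 0)) * g i j * (v j - (if j = m then \<alpha> else 0)))
     = (\<Sum>i<n. (\<Sum>j<n. cnj (v i) * g i j * v j) - cnj (v i) * g i m * \<alpha>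
       - (if i = m then cnj \<alpha> else 0) * (\<Sum>j<n. g i j * v j) + (if i = m then cnj \<alpha> else 0) * (g i m * \<alpha>))"
    using inner by (simp add: mult.assoc)
  also have "\<dots> = (\<Sum>i<n. \<Sum>j<n. cnj (v i) * g i j * v j) - (\<Sum>i<n. cnj (v i) * g i m) * \<alpha>
       - (\<Sum>i<n. (if i = m then cnj \<alpha> else 0) * (\<Sum>j<n. g i j * v j)) + (\<Sum>i<n. (if i = m then cnj \<alpha> else 0) * (g i m * \<alpha>))"
    by (simp add: sum.distrib sum_subtractf sum_distrib_right)
  also have "\<dots> = (\<Sum>i<n. \<Sum>j<n. cnj (v i) * g i j * v j) - (\<Sum>i<n. cnj (v i) * g i m) * \<alpha>
       - cnj \<alpha> * (\<Sum>j<n. g m j * v j) + cnj \<alpha> * (g m m * \<alpha>)"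
    by (simp only: sum_delta_nat[OF assms])
  finally show ?thesis by (simp add: algebra_simps)
qed

lemma schur_psd:
  fixes g :: "nat \<Rightarrow> nat \<Rightarrow> complex"
  assumes g: "psdf n g" and m: "m < n" and gmm: "g m m = complex_of_real c" and c: "0 < c"
  shows "psdf n (\<lambda>i j. g i j - g i m * g m j / g m m)"
  unfolding psdf_def
proof (intro conjI allI impI)
  fix i j assume i: "i < n" and j: "j < n"
  show "g i j - g i m * g m j / g m m = cnj (g j i - g j m * g m i / g m m)"
    using psdf_herm[OF g i j] psdf_herm[OF g j m] psdf_herm[OF g m i] gmm by simp
next
  fix v :: "nat \<Rightarrow> complex"
  define s where "s = (\<Sum>j<n. g m j * v j)"
  have cs: "(\<Sum>i<n. cnj (v i) * g i m) = cnj s"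
    unfolding s_def cnj_sum by (rule sum.cong) (auto simp: psdf_herm[OF g _ m])
  have "(\<Sum>i<n. \<Sum>j<n. cnj (v i) * (g i j - g i m * g m j / g m m) * v j)
      = (\<Sum>i<n. \<Sum>j<n. cnj (v i) * g i j * v j) - (\<Sum>i<n. \<Sum>j<n. (cnj (v i) * g i m) * (g m j * v j)) / g m m"
    by (simp add: sum_subtractf sum_divide_distrib algebra_simps)
  also have "(\<Sum>i<n. \<Sum>j<n. (cnj (v i) * g i m) * (g m j * v j)) = (\<Sum>i<n. cnj (v i) * g i m) * (\<Sum>j<n. g m j * v j)"
    by (simp add: sum_product)
  also have "\<dots> = cnj s * s" using cs s_def by simp
  finally have L: "(\<Sum>i<n. \<Sum>j<n. cnj (v i) * (g i j - g i m * g m j / g m m) * v j)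
      = (\<Sum>i<n. \<Sum>j<n. cnj (v i) * g i j * v j) - cnj s * s / complex_of_real c" using gmm by simp
  define \<alpha> where "\<alpha> = s / complex_of_real c"
  have R: "(\<Sum>i<n. \<Sum>j<n. cnj (v i - (if i = m then \<alpha> else 0)) * g i j * (v j - (if j = m then \<alpha> else 0)))
     = (\<Sum>i<n. \<Sum>j<n. cnj (v i) * g i j * v j) - cnj s * s / complex_of_real c"
    unfolding form_shift[OF m] cs s_def[symmetric] gmm \<alpha>_def using c by (simp add: field_simps)
  show "0 \<le> Re (\<Sum>i<n. \<Sum>j<n. cnj (v i) * (g i j - g i m * g m j / g m m) * v j)"
    unfolding L R[symmetric] by (rule psdf_form[OF g])
qed

lemma psdf_trace_aux:
  fixes f :: "nat \<Rightarrow> nat \<Rightarrow> complex"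
  assumes f: "psdf n f"
  shows "\<forall>g. psdf n g \<and> (\<forall>i<n. \<forall>j<n. (k \<le> i \<or> k \<le> j) \<longrightarrow> g i j = 0)
           \<longrightarrow> 0 \<le> Re (\<Sum>i<n. \<Sum>j<n. f i j * g j i)"
proof (induction k)
  case 0
  show ?case by simp
next
  case (Suc k)
  show ?case
  proof (intro allI impI, elim conjE)
    fix g assume g: "psdf n g" and z: "\<forall>i<n. \<forall>j<n. (Suc k \<le> i \<or> Suc k \<le> j) \<longrightarrow> g i j = 0"
    show "0 \<le> Re (\<Sum>i<n. \<Sum>j<n. f i j * g j i)"
    proof (cases "k < n")
      case False
      then have "\<forall>i<n. \<forall>j<n. (k \<le> i \<or> k \<le> j) \<longrightarrow> g i j = 0" by auto
      then show ?thesis using Suc.IH[rule_format, OF conjI[OF g]] by simp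
    next
      case km: True
      define c where "c = Re (g k k)"
      have gkk: "g k k = complex_of_real c" using psdf_diag(3)[OF g km] c_def by simp
      have c0: "0 \<le> c" using psdf_diag(2)[OF g km] c_def by simp
      show ?thesis
      proof (cases "c = 0")
        case True
        have A: "\<And>i. i < n \<Longrightarrow> g i k = 0"
        proof -
          fix i assume i: "i < n"
          have "(cmod (g i k))^2 \<le> Re (g i i) * Re (g k k)" by (rule psdf_offdiag[OF g i km])
          then show "g i k = 0" using True c_def by simp
        qed
        have B: "\<And>i. i < n \<Longrightarrow> g k i = 0"
          using A psdf_herm[OF g km] by (metis complex_cnj_zero)
        have "\<forall>i<n. \<forall>j<n. (k \<le> i \<or> k \<le> j) \<longrightarrow> g i j = 0"
        proof (intro allI impI)
          fix i j assume "i < n" "j < n" "k \<le> i \<or> k \<le> j"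
          then consider "i = k" | "j = k" | "Suc k \<le> i \<or> Suc k \<le> j" by linarith
          then show "g i j = 0" using A B z \<open>i < n\<close> \<open>j < n\<close> by cases auto
        qed
        then show ?thesis using Suc.IH[rule_format, OF conjI[OF g]] by simp
      next
        case False
        then have cp: "0 < c" using c0 by simp
        define g' where "g' = (\<lambda>i j. g i j - g i k * g k j / g k k)"
        have g'psd: "psdf n g'" unfolding g'_def by (rule schur_psd[OF g km gkk cp])
        have g'z: "\<forall>i<n. \<forall>j<n. (k \<le> i \<or> k \<le> j) \<longrightarrow> g' i j = 0"
        proof (intro allI impI)
          fix i j assume i: "i < n" and j: "j < n" and ij: "k \<le> i \<or> k \<le> j"
          show "g' i j = 0"
          proof (cases "i = k")
            case True then show ?thesis unfolding g'_def using gkk cp by simp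
          next
            case ik: False
            show ?thesis
            proof (cases "j = k")
              case True then show ?thesis unfolding g'_def using gkk cp by simp
            next
              case False
              then have "Suc k \<le> i \<or> Suc k \<le> j" using ik ij by auto
              then have "g i j = 0" "g i k = 0 \<or> g k j = 0" using z i j km by auto
              then show ?thesis unfolding g'_def by auto
            qed
          qed
        qed
        have IH': "0 \<le> Re (\<Sum>i<n. \<Sum>j<n. f i j * g' j i)" using Suc.IH[rule_format, OF conjI[OF g'psd g'z]] .
        define u where "u = (\<lambda>i. g i k)"
        have split: "\<And>i j. i < n \<Longrightarrow> j < n \<Longrightarrow> f i j * g j i = f i j * g' j i + (cnj (u i) * f i j * u j) / complex_of_real c"
        proof -
          fix i j assume i: "i < n" and j: "j < n"
          have cu: "cnj (u i) = g k i" unfolding u_def using psdf_herm[OF g km i] by simp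
          show "f i j * g j i = f i j * g' j i + (cnj (u i) * f i j * u j) / complex_of_real c"
            unfolding cu unfolding g'_def u_def gkk by (simp add: right_diff_distrib mult.commute mult.left_commute times_divide_eq_right)
        qed
        have "(\<Sum>i<n. \<Sum>j<n. f i j * g j i) = (\<Sum>i<n. \<Sum>j<n. f i j * g' j i) + (\<Sum>i<n. \<Sum>j<n. cnj (u i) * f i j * u j) / complex_of_real c"
          by (simp add: split sum.distrib sum_divide_distrib)
        moreover have "0 \<le> Re ((\<Sum>i<n. \<Sum>j<n. cnj (u i) * f i j * u j) / complex_of_real c)"
          unfolding Re_divide_of_real using psdf_form[OF f, of u] cp by simp
        ultimately show ?thesis using IH' by simp
      qed
    qed
  qed
qed

lemma psdf_trace_nonneg:
  assumes "psdf n f" "psdf n g"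
  shows "0 \<le> Re (\<Sum>i<n. \<Sum>j<n. f i j * g j i)"
proof -
  have "\<forall>i<n. \<forall>j<n. (n \<le> i \<or> n \<le> j) \<longrightarrow> g i j = 0" by auto
  then show ?thesis using psdf_trace_aux[OF assms(1), of n, rule_format, OF conjI[OF assms(2)]] by simp
qed

lemma cmod_diff_sq: "(cmod (a - b))^2 = (cmod a)^2 + (cmod b)^2 - 2 * Re (a * cnj b)"
  unfolding cmod_power2 by (simp add: power2_eq_square algebra_simps)

lemma psdf_sq_le:
  assumes f: "psdf n f" and tr: "(\<Sum>i<n. Re (f i i)) = 1"
  shows "(\<Sum>i<n. \<Sum>j<n. (cmod (f i j))^2) \<le> 1"
proof -
  have "(\<Sum>i<n. \<Sum>j<n. (cmod (f i j))^2) \<le> (\<Sum>i<n. \<Sum>j<n. Re (f i i) * Re (f j j))"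
    by (intro sum_mono psdf_offdiag[OF f]) auto
  also have "\<dots> = (\<Sum>i<n. Re (f i i)) * (\<Sum>j<n. Re (f j j))" by (simp add: sum_product)
  finally show ?thesis using tr by simp
qed

lemma psdf_dist_le:
  assumes f: "psdf n f" and g: "psdf n g"
    and trf: "(\<Sum>i<n. Re (f i i)) = 1" and trg: "(\<Sum>i<n. Re (g i i)) = 1"
  shows "(\<Sum>i<n. \<Sum>j<n. (cmod (f i j - g i j))^2) \<le> 2"
proof -
  have cross: "(\<Sum>i<n. \<Sum>j<n. Re (f i j * cnj (g i j))) = Re (\<Sum>i<n. \<Sum>j<n. f i j * g j i)"
  proof -
    have "\<And>i j. i < n \<Longrightarrow> j < n \<Longrightarrow> Re (f i j * cnj (g i j)) = Re (f i j * g j i)"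
      using psdf_herm[OF g] by metis
    then show ?thesis by simp
  qed
  have "(\<Sum>i<n. \<Sum>j<n. (cmod (f i j - g i j))^2)
      = (\<Sum>i<n. \<Sum>j<n. (cmod (f i j))^2) + (\<Sum>i<n. \<Sum>j<n. (cmod (g i j))^2) - 2 * (\<Sum>i<n. \<Sum>j<n. Re (f i j * cnj (g i j)))"
    by (simp add: cmod_diff_sq sum.distrib sum_subtractf sum_distrib_left)
  also have "\<dots> \<le> 1 + 1 - 0"
    using psdf_sq_le[OF f trf] psdf_sq_le[OF g trg] psdf_trace_nonneg[OF f g] cross by linarith
  finally show ?thesis by simp
qed

lemma amgm_c:
  assumes t: "0 < t"
  shows "Re (a * b) \<le> t / 2 * (cmod a)^2 + 1 / (2 * t) * (cmod b)^2"
proof -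
  have "Re (a * b) \<le> cmod (a * b)" by (rule complex_Re_le_cmod)
  also have "\<dots> = cmod a * cmod b" by (simp add: norm_mult)
  also have "\<dots> \<le> t / 2 * (cmod a)^2 + 1 / (2 * t) * (cmod b)^2"
  proof -
    have "0 \<le> (t * cmod a - cmod b)^2 / (2 * t)" using t by simp
    also have "(t * cmod a - cmod b)^2 / (2 * t) = t / 2 * (cmod a)^2 + 1 / (2 * t) * (cmod b)^2 - cmod a * cmod b"
      using t by (simp add: power2_eq_square field_simps)
    finally show ?thesis by simp
  qed
  finally show ?thesis .
qed

lemma par4: "(cmod (a + b + c))^2 + (cmod (a + b - c))^2 + (cmod (a - b + c))^2 + (cmod (a - b - c))^2
   = 4 * ((cmod a)^2 + (cmod b)^2 + (cmod c)^2)"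
  unfolding cmod_power2 by (simp add: power2_eq_square algebra_simps)

lemma pair_bound:
  assumes A: "psdf n A" and B: "psdf n B" and trA: "(\<Sum>i<n. Re (A i i)) = 1" and trB: "(\<Sum>i<n. Re (B i i)) = 1"
    and t: "0 < t"
  shows "Re (\<Sum>i<n. \<Sum>k<n. (A i k - B i k) * C k i) \<le> t + 1 / (2 * t) * (\<Sum>i<n. \<Sum>k<n. (cmod (C k i))^2)"
proof -
  have "Re (\<Sum>i<n. \<Sum>k<n. (A i k - B i k) * C k i) = (\<Sum>i<n. \<Sum>k<n. Re ((A i k - B i k) * C k i))" by simp
  also have "\<dots> \<le> (\<Sum>i<n. \<Sum>k<n. t / 2 * (cmod (A i k - B i k))^2 + 1 / (2 * t) * (cmod (C k i))^2)"
    by (intro sum_mono amgm_c t)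
  also have "\<dots> = t / 2 * (\<Sum>i<n. \<Sum>k<n. (cmod (A i k - B i k))^2) + 1 / (2 * t) * (\<Sum>i<n. \<Sum>k<n. (cmod (C k i))^2)"
    by (simp add: sum.distrib sum_distrib_left)
  also have "\<dots> \<le> t / 2 * 2 + 1 / (2 * t) * (\<Sum>i<n. \<Sum>k<n. (cmod (C k i))^2)"
    using psdf_dist_le[OF A B trA trB] t by simp
  finally show ?thesis by simp
qed

definition TT :: "(nat \<Rightarrow> nat \<Rightarrow> complex) \<Rightarrow> (nat \<Rightarrow> nat \<Rightarrow> complex) \<Rightarrow> real" where
  "TT a M = Re (\<Sum>i<4. \<Sum>k<4. a i k * M k i)"

lemma lin3:
  "s1 * TT A O1 + s2 * TT A O2 + s3 * TT A O3 - (s1 * TT B O1 + s2 * TT B O2 + s3 * TT B O3)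
   = Re (\<Sum>i<4. \<Sum>k<4. (A i k - B i k) * (complex_of_real s1 * O1 k i + complex_of_real s2 * O2 k i + complex_of_real s3 * O3 k i))"
  unfolding TT_def by (simp add: algebra_simps sum.distrib sum_subtractf sum_distrib_left)

lemma core_bound:
  fixes A0 A1 A2 A3 B0 B1 B2 B3 O1 O2 O3 :: "nat \<Rightarrow> nat \<Rightarrow> complex"
  assumes pA0: "psdf 4 A0" and pA1: "psdf 4 A1" and pA2: "psdf 4 A2" and pA3: "psdf 4 A3"
    and pB0: "psdf 4 B0" and pB1: "psdf 4 B1" and pB2: "psdf 4 B2" and pB3: "psdf 4 B3"
    and tA0: "(\<Sum>i<4. Re (A0 i i)) = 1" and tA1: "(\<Sum>i<4. Re (A1 i i)) = 1"
    and tA2: "(\<Sum>i<4. Re (A2 i i)) = 1" and tA3: "(\<Sum>i<4. Re (A3 i i)) = 1"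
    and tB0: "(\<Sum>i<4. Re (B0 i i)) = 1" and tB1: "(\<Sum>i<4. Re (B1 i i)) = 1"
    and tB2: "(\<Sum>i<4. Re (B2 i i)) = 1" and tB3: "(\<Sum>i<4. Re (B3 i i)) = 1"
    and n1: "(\<Sum>i<4. \<Sum>k<4. (cmod (O1 k i))^2) = 4"
    and n2: "(\<Sum>i<4. \<Sum>k<4. (cmod (O2 k i))^2) = 4"
    and n3: "(\<Sum>i<4. \<Sum>k<4. (cmod (O3 k i))^2) = 4"
  shows "(1 * TT A0 O1 + 1 * TT A0 O2 + 1 * TT A0 O3 - (1 * TT B0 O1 + 1 * TT B0 O2 + 1 * TT B0 O3))
       + (1 * TT A1 O1 + 1 * TT A1 O2 + (-1) * TT A1 O3 - (1 * TT B1 O1 + 1 * TT B1 O2 + (-1) * TT B1 O3))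
       + (1 * TT A2 O1 + (-1) * TT A2 O2 + 1 * TT A2 O3 - (1 * TT B2 O1 + (-1) * TT B2 O2 + 1 * TT B2 O3))
       + (1 * TT A3 O1 + (-1) * TT A3 O2 + (-1) * TT A3 O3 - (1 * TT B3 O1 + (-1) * TT B3 O2 + (-1) * TT B3 O3))
       \<le> 8 * sqrt 6"
proof -
  define t where "t = sqrt 6"
  have t: "0 < t" unfolding t_def by simp
  define C0 where "C0 = (\<lambda>k i. complex_of_real 1 * O1 k i + complex_of_real 1 * O2 k i + complex_of_real 1 * O3 k i)"
  define C1 where "C1 = (\<lambda>k i. complex_of_real 1 * O1 k i + complex_of_real 1 * O2 k i + complex_of_real (-1) * O3 k i)"
  define C2 where "C2 = (\<lambda>k i. complex_of_real 1 * O1 k i + complex_of_real (-1) * O2 k i + complex_of_real 1 * O3 k i)"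
  define C3 where "C3 = (\<lambda>k i. complex_of_real 1 * O1 k i + complex_of_real (-1) * O2 k i + complex_of_real (-1) * O3 k i)"
  note b0 = pair_bound[OF pA0 pB0 tA0 tB0 t, of C0]
  note b1 = pair_bound[OF pA1 pB1 tA1 tB1 t, of C1]
  note b2 = pair_bound[OF pA2 pB2 tA2 tB2 t, of C2]
  note b3 = pair_bound[OF pA3 pB3 tA3 tB3 t, of C3]
  have pw: "\<And>k i. (cmod (C0 k i))^2 + (cmod (C1 k i))^2 + (cmod (C2 k i))^2 + (cmod (C3 k i))^2
      = 4 * ((cmod (O1 k i))^2 + (cmod (O2 k i))^2 + (cmod (O3 k i))^2)"
    unfolding C0_def C1_def C2_def C3_def by (simp add: par4)
  have S: "(\<Sum>i<4. \<Sum>k<4. (cmod (C0 k i))^2) + (\<Sum>i<4. \<Sum>k<4. (cmod (C1 k i))^2)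
         + (\<Sum>i<4. \<Sum>k<4. (cmod (C2 k i))^2) + (\<Sum>i<4. \<Sum>k<4. (cmod (C3 k i))^2) = 48"
  proof -
    have "(\<Sum>i<4. \<Sum>k<4. (cmod (C0 k i))^2) + (\<Sum>i<4. \<Sum>k<4. (cmod (C1 k i))^2)
         + (\<Sum>i<4. \<Sum>k<4. (cmod (C2 k i))^2) + (\<Sum>i<4. \<Sum>k<4. (cmod (C3 k i))^2)
        = (\<Sum>i<4::nat. \<Sum>k<4::nat. (cmod (C0 k i))^2 + (cmod (C1 k i))^2 + (cmod (C2 k i))^2 + (cmod (C3 k i))^2)"
      by (simp only: sum.distrib)
    also have "\<dots> = (\<Sum>i<4::nat. \<Sum>k<4::nat. 4 * ((cmod (O1 k i))^2 + (cmod (O2 k i))^2 + (cmod (O3 k i))^2))"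
      by (simp only: pw)
    also have "\<dots> = 4 * ((\<Sum>i<4. \<Sum>k<4. (cmod (O1 k i))^2) + (\<Sum>i<4. \<Sum>k<4. (cmod (O2 k i))^2) + (\<Sum>i<4. \<Sum>k<4. (cmod (O3 k i))^2))"
      by (simp add: sum.distrib sum_distrib_left)
    also have "\<dots> = 48" using n1 n2 n3 by simp
    finally show ?thesis .
  qed
  have "(1 * TT A0 O1 + 1 * TT A0 O2 + 1 * TT A0 O3 - (1 * TT B0 O1 + 1 * TT B0 O2 + 1 * TT B0 O3))
       + (1 * TT A1 O1 + 1 * TT A1 O2 + (-1) * TT A1 O3 - (1 * TT B1 O1 + 1 * TT B1 O2 + (-1) * TT B1 O3))
       + (1 * TT A2 O1 + (-1) * TT A2 O2 + 1 * TT A2 O3 - (1 * TT B2 O1 + (-1) * TT B2 O2 + 1 * TT B2 O3))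
       + (1 * TT A3 O1 + (-1) * TT A3 O2 + (-1) * TT A3 O3 - (1 * TT B3 O1 + (-1) * TT B3 O2 + (-1) * TT B3 O3))
     = Re (\<Sum>i<4. \<Sum>k<4. (A0 i k - B0 i k) * C0 k i) + Re (\<Sum>i<4. \<Sum>k<4. (A1 i k - B1 i k) * C1 k i)
     + Re (\<Sum>i<4. \<Sum>k<4. (A2 i k - B2 i k) * C2 k i) + Re (\<Sum>i<4. \<Sum>k<4. (A3 i k - B3 i k) * C3 k i)"
    unfolding C0_def C1_def C2_def C3_def lin3 ..
  also have "\<dots> \<le> 4 * t + 1 / (2 * t) * 48"
  proof -
    have "1 / (2 * t) * 48 = 1 / (2 * t) * (\<Sum>i<4. \<Sum>k<4. (cmod (C0 k i))^2) + 1 / (2 * t) * (\<Sum>i<4. \<Sum>k<4. (cmod (C1 k i))^2)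
         + 1 / (2 * t) * (\<Sum>i<4. \<Sum>k<4. (cmod (C2 k i))^2) + 1 / (2 * t) * (\<Sum>i<4. \<Sum>k<4. (cmod (C3 k i))^2)"
      unfolding S[symmetric] by (simp only: distrib_left)
    then show ?thesis using b0 b1 b2 b3 by linarith
  qed
  also have "\<dots> = 8 * sqrt 6"
  proof -
    have "t * t = 6" unfolding t_def by simp
    then have "1 / (2 * t) * 48 = 4 * t" using t by (simp add: field_simps)
    then show ?thesis unfolding t_def by simp
  qed
  finally show ?thesis .
qed

lemma psd_psdf: "psd n A \<Longrightarrow> psdf n (\<lambda>i j. A $$ (i, j))"
  unfolding psd_def hermitian_n_def psdf_def by blast

lemma mult_entry:
  assumes "A \<in> carrier_mat n n" "B \<in> carrier_mat n n" "i < n" "j < n"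
  shows "(A * B) $$ (i, j) = (\<Sum>k<n. A $$ (i, k) * B $$ (k, j))"
  using assms by (simp add: scalar_prod_def lessThan_atLeast0)

lemma mtrace_mult:
  assumes "A \<in> carrier_mat n n" "B \<in> carrier_mat n n"
  shows "mtrace (A * B) = (\<Sum>i<n. \<Sum>k<n. A $$ (i, k) * B $$ (k, i))"
proof -
  have "dim_row (A * B) = n" using assms by simp
  then show ?thesis unfolding mtrace_def
  proof (simp only:, intro sum.cong refl)
    fix i assume "i \<in> {..<n}"
    then show "(A * B) $$ (i, i) = (\<Sum>k<n. A $$ (i, k) * B $$ (k, i))" using mult_entry[OF assms] by simp
  qed
qed

lemma projector_norm:
  assumes P: "projector n P"
  shows "(\<Sum>i<n. \<Sum>k<n. (cmod (2 * P $$ (k, i) - (if k = i then 1 else 0)))^2) = real n"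
proof -
  have car: "P \<in> carrier_mat n n" using P unfolding projector_def hermitian_n_def by blast
  have herm: "\<And>i j. i < n \<Longrightarrow> j < n \<Longrightarrow> P $$ (i, j) = cnj (P $$ (j, i))"
    using P unfolding projector_def hermitian_n_def by blast
  have idem: "\<And>i. i < n \<Longrightarrow> (\<Sum>k<n. P $$ (i, k) * P $$ (k, i)) = P $$ (i, i)"
  proof -
    fix i assume i: "i < n"
    have "P * P = P" using P unfolding projector_def by blast
    then have "(P * P) $$ (i, i) = P $$ (i, i)" by simp
    then show "(\<Sum>k<n. P $$ (i, k) * P $$ (k, i)) = P $$ (i, i)" using mult_entry[OF car car i i] by simp
  qed
  have pw: "\<And>i k. i < n \<Longrightarrow> k < n \<Longrightarrow> complex_of_real ((cmod (2 * P $$ (k, i) - (if k = i then 1 else 0)))^2)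
      = 4 * (P $$ (i, k) * P $$ (k, i)) - 2 * ((if k = i then 1 else 0) * P $$ (i, k)) - 2 * ((if k = i then 1 else 0) * P $$ (k, i))
        + (if k = i then 1 else 0)"
  proof -
    fix i k assume i: "i < n" and k: "k < n"
    have "complex_of_real ((cmod (2 * P $$ (k, i) - (if k = i then 1 else 0)))^2)
       = (2 * P $$ (k, i) - (if k = i then 1 else 0)) * cnj (2 * P $$ (k, i) - (if k = i then 1 else 0))"
      by (rule complex_norm_square)
    also have "cnj (2 * P $$ (k, i) - (if k = i then 1 else 0)) = 2 * P $$ (i, k) - (if k = i then 1 else 0)"
      using herm[OF i k] by simp
    finally show "?thesis i k" by (simp add: algebra_simps)
  qed
  have "complex_of_real (\<Sum>i<n. \<Sum>k<n. (cmod (2 * P $$ (k, i) - (if k = i then 1 else 0)))^2)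
      = (\<Sum>i<n. \<Sum>k<n. 4 * (P $$ (i, k) * P $$ (k, i)) - 2 * ((if k = i then 1 else 0) * P $$ (i, k)) - 2 * ((if k = i then 1 else 0) * P $$ (k, i))
        + (if k = i then 1 else 0))"
  proof (simp only: of_real_sum, intro sum.cong refl)
    fix i k assume "i \<in> {..<n}" "k \<in> {..<n}"
    then show "complex_of_real ((cmod (2 * P $$ (k, i) - (if k = i then 1 else 0)))^2)
      = 4 * (P $$ (i, k) * P $$ (k, i)) - 2 * ((if k = i then 1 else 0) * P $$ (i, k)) - 2 * ((if k = i then 1 else 0) * P $$ (k, i))
        + (if k = i then 1 else 0)" by - (rule pw, auto)
  qed
  also have "\<dots> = (\<Sum>i<n. 4 * (\<Sum>k<n. P $$ (i, k) * P $$ (k, i)) - 2 * (\<Sum>k<n. (if k = i then 1 else 0) * P $$ (i, k))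
        - 2 * (\<Sum>k<n. (if k = i then 1 else 0) * P $$ (k, i)) + (\<Sum>k<n. (if k = i then 1 else 0)))"
    by (simp only: sum.distrib sum_subtractf sum_distrib_left)
  also have "\<dots> = (\<Sum>i<n. 4 * P $$ (i, i) - 2 * P $$ (i, i) - 2 * P $$ (i, i) + 1)"
  proof (intro sum.cong refl)
    fix i assume "i \<in> {..<n}"
    then have i: "i < n" by simp
    have d1: "(\<Sum>k<n. (if k = i then 1 else 0) * P $$ (i, k)) = P $$ (i, i)" using sum_delta_nat[OF i, of 1] by simp
    have d2: "(\<Sum>k<n. (if k = i then 1 else 0) * P $$ (k, i)) = P $$ (i, i)" using sum_delta_nat[OF i, of 1] by simp
    have d3: "(\<Sum>k<n. (if k = i then 1 else 0 :: complex)) = 1" using i by (simp add: sum.delta')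
    show "4 * (\<Sum>k<n. P $$ (i, k) * P $$ (k, i)) - 2 * (\<Sum>k<n. (if k = i then 1 else 0) * P $$ (i, k))
        - 2 * (\<Sum>k<n. (if k = i then 1 else 0) * P $$ (k, i)) + (\<Sum>k<n. (if k = i then 1 else 0)) =
        4 * P $$ (i, i) - 2 * P $$ (i, i) - 2 * P $$ (i, i) + 1"
      unfolding idem[OF i] d1 d2 d3 ..
  qed
  also have "\<dots> = of_nat n" by simp
  finally have "complex_of_real (\<Sum>i<n. \<Sum>k<n. (cmod (2 * P $$ (k, i) - (if k = i then 1 else 0)))^2) = complex_of_real (real n)" by simp
  then show ?thesis using of_real_eq_iff by blast
qed

lemma sum4: "(\<Sum>i<4::nat. f i) = f 0 + f 1 + f 2 + f 3"
  by (simp add: eval_nat_numeral add.commute add.left_commute)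

lemma sum2: "(\<Sum>i<2::nat. f i) = f 0 + f 1"
  by (simp add: eval_nat_numeral)

definition blk :: "complex mat \<Rightarrow> nat \<Rightarrow> nat \<Rightarrow> nat \<Rightarrow> complex mat" where
  "blk M k a b = mat 2 2 (\<lambda>(i, j). M $$ (i*k + a, j*k + b))"

lemma ampl_entry:
  assumes "r < 2*k" "s < 2*k"
  shows "ampl \<Lambda> k M $$ (r, s) = \<Lambda> (blk M k (r mod k) (s mod k)) $$ (r div k, s div k)"
  using assms unfolding ampl_def blk_def by simp

lemma ampl_dim [simp]: "ampl \<Lambda> k M \<in> carrier_mat (2*k) (2*k)" "dim_row (ampl \<Lambda> k M) = 2*k" "dim_col (ampl \<Lambda> k M) = 2*k"
  unfolding ampl_def by auto

lemma ampl_trace: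
  assumes L: "qubit_linear \<Lambda>" and T: "trace_preserving \<Lambda>"
  shows "mtrace (ampl \<Lambda> 2 \<rho>) = \<rho> $$ (0,0) + \<rho> $$ (1,1) + \<rho> $$ (2,2) + \<rho> $$ (3,3)"
proof -
  have bc: "\<And>a. blk \<rho> 2 a a \<in> carrier_mat 2 2" unfolding blk_def by simp
  have lc: "\<And>a. \<Lambda> (blk \<rho> 2 a a) \<in> carrier_mat 2 2" using L bc unfolding qubit_linear_def by blast
  have tr: "\<And>a. \<Lambda> (blk \<rho> 2 a a) $$ (0,0) + \<Lambda> (blk \<rho> 2 a a) $$ (1,1) = \<rho> $$ (a, a) + \<rho> $$ (2 + a, 2 + a)"
  proof -
    fix a
    have "mtrace (\<Lambda> (blk \<rho> 2 a a)) = mtrace (blk \<rho> 2 a a)" using T bc unfolding trace_preserving_def by blast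
    moreover have "mtrace (\<Lambda> (blk \<rho> 2 a a)) = \<Lambda> (blk \<rho> 2 a a) $$ (0,0) + \<Lambda> (blk \<rho> 2 a a) $$ (1,1)"
      unfolding mtrace_def using lc[of a] by (simp add: sum2)
    moreover have "mtrace (blk \<rho> 2 a a) = \<rho> $$ (a, a) + \<rho> $$ (2 + a, 2 + a)"
      unfolding mtrace_def blk_def by (simp add: sum2)
    ultimately show "?thesis a" by simp
  qed
  have "mtrace (ampl \<Lambda> 2 \<rho>) = (\<Sum>r<4. ampl \<Lambda> 2 \<rho> $$ (r, r))" unfolding mtrace_def by simp
  also have "\<dots> = \<Lambda> (blk \<rho> 2 0 0) $$ (0,0) + \<Lambda> (blk \<rho> 2 1 1) $$ (0,0) + \<Lambda> (blk \<rho> 2 0 0) $$ (1,1) + \<Lambda> (blk \<rho> 2 1 1) $$ (1,1)"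
    unfolding sum4 by (simp add: ampl_entry)
  also have "\<dots> = \<rho> $$ (0,0) + \<rho> $$ (1,1) + \<rho> $$ (2,2) + \<rho> $$ (3,3)"
    using tr[of 0] tr[of 1] by (simp add: algebra_simps eval_nat_numeral)
  finally show ?thesis .
qed

lemma sum_sum_delta: "(\<Sum>i<n. \<Sum>k<n. f i k * (if k = i then 1 else 0)) = (\<Sum>i<n. f i i)" for f :: "nat \<Rightarrow> nat \<Rightarrow> complex"
  by (intro sum.cong refl) (simp add: sum_delta_nat')

lemma term_expand:
  fixes P :: "bool \<Rightarrow> complex mat"
  assumes sc: "\<sigma> \<in> carrier_mat 4 4" and st: "(\<Sum>i<4. Re (\<sigma> $$ (i, i))) = 1"
    and p0: "P False \<in> carrier_mat 4 4" and p1: "P True \<in> carrier_mat 4 4" and ps: "P False + P True = 1\<^sub>m 4"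
  shows "Re (mtrace (\<sigma> * P b)) = 1/2 + (if b then -1 else 1) / 2 * TT (\<lambda>i k. \<sigma> $$ (i, k)) (\<lambda>k i. 2 * P False $$ (k, i) - (if k = i then 1 else 0))"
proof -
  define R where "R = Re (\<Sum>i<4. \<Sum>k<4. \<sigma> $$ (i, k) * P False $$ (k, i))"
  have "TT (\<lambda>i k. \<sigma> $$ (i, k)) (\<lambda>k i. 2 * P False $$ (k, i) - (if k = i then 1 else 0))
     = Re (\<Sum>i<4. \<Sum>k<4. 2 * (\<sigma> $$ (i, k) * P False $$ (k, i)) - \<sigma> $$ (i, k) * (if k = i then 1 else 0))"
    unfolding TT_def by (simp add: algebra_simps)
  also have "\<dots> = 2 * R - Re (\<Sum>i<4. \<Sum>k<4. \<sigma> $$ (i, k) * (if k = i then 1 else 0))"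
    unfolding R_def by (simp only: sum_subtractf sum_distrib_left[symmetric] Re_sum) simp
  also have "\<dots> = 2 * R - 1" unfolding sum_sum_delta using st by simp
  finally have TTe: "TT (\<lambda>i k. \<sigma> $$ (i, k)) (\<lambda>k i. 2 * P False $$ (k, i) - (if k = i then 1 else 0)) = 2 * R - 1" .
  show ?thesis
  proof (cases b)
    case False
    have "Re (mtrace (\<sigma> * P False)) = R" using mtrace_mult[OF sc p0] R_def by simp
    then show ?thesis unfolding TTe using False by (simp add: field_simps)
  next
    case True
    have e: "\<And>k i. k < 4 \<Longrightarrow> i < 4 \<Longrightarrow> P True $$ (k, i) = (if k = i then 1 else 0) - P False $$ (k, i)"
    proof -
      fix k i :: nat assume "k < 4" "i < 4"
      then have "(P False + P True) $$ (k, i) = (1\<^sub>m 4 :: complex mat) $$ (k, i)" using ps by simp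
      then show "P True $$ (k, i) = (if k = i then 1 else 0) - P False $$ (k, i)" using p0 p1 \<open>k < 4\<close> \<open>i < 4\<close> by (auto simp: eq_diff_eq add.commute eq_neg_iff_add_eq_0)
    qed
    have "mtrace (\<sigma> * P True) = (\<Sum>i<4. \<Sum>k<4. \<sigma> $$ (i, k) * ((if k = i then 1 else 0) - P False $$ (k, i)))"
      unfolding mtrace_mult[OF sc p1] by (intro sum.cong refl) (simp add: e)
    also have "\<dots> = (\<Sum>i<4. \<Sum>k<4. \<sigma> $$ (i, k) * (if k = i then 1 else 0)) - (\<Sum>i<4. \<Sum>k<4. \<sigma> $$ (i, k) * P False $$ (k, i))"
      by (simp only: right_diff_distrib sum_subtractf)
    finally have "Re (mtrace (\<sigma> * P True)) = 1 - R" unfolding sum_sum_delta R_def using st by simp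
    then show ?thesis unfolding TTe using True by (simp add: field_simps)
  qed
qed

lemma X3_set: "{xs::bool list. length xs = 3} = {[False,False,False], [False,False,True], [False,True,False], [False,True,True],
   [True,False,False], [True,False,True], [True,True,False], [True,True,True]}" (is "?L = ?R")
proof
  show "?L \<subseteq> ?R"
  proof
    fix xs :: "bool list" assume "xs \<in> ?L"
    then obtain a b c where "xs = [a, b, c]" by (auto simp: numeral_3_eq_3 length_Suc_conv)
    then show "xs \<in> ?R" by (cases a; cases b; cases c) auto
  qed
  show "?R \<subseteq> ?L" by auto
qed

lemma X3_sum: "(\<Sum>x\<in>{xs::bool list. length xs = 3}. f x) = f [False,False,False] + f [False,False,True] + f [False,True,False] + f [False,True,True]
   + f [True,False,False] + f [True,False,True] + f [True,True,False] + f [True,True,True]"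
  unfolding X3_set by (simp add: add.assoc)

lemma Y3_sum: "(\<Sum>y\<in>{1..3::nat}. g y) = g 1 + g 2 + g 3"
proof -
  have "{1..3::nat} = {1, 2, 3}" by auto
  then show ?thesis by (simp add: add.assoc)
qed

lemma sigma_good:
  assumes rho: "density 4 \<rho>" and c: "cptp \<Lambda>"
  shows "ampl \<Lambda> 2 \<rho> \<in> carrier_mat 4 4" "psdf 4 (\<lambda>i j. ampl \<Lambda> 2 \<rho> $$ (i, j))"
    "(\<Sum>i<4. Re (ampl \<Lambda> 2 \<rho> $$ (i, i))) = 1"
proof -
  show "ampl \<Lambda> 2 \<rho> \<in> carrier_mat 4 4" using ampl_dim(1)[of \<Lambda> 2 \<rho>] by simp
  have "psd (2*2) \<rho>" using rho unfolding density_def by simp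
  then have "psd (2*2) (ampl \<Lambda> 2 \<rho>)" using c unfolding cptp_def completely_positive_def by blast
  then show "psdf 4 (\<lambda>i j. ampl \<Lambda> 2 \<rho> $$ (i, j))" using psd_psdf by simp
  have rc: "\<rho> \<in> carrier_mat 4 4" using rho unfolding density_def psd_def hermitian_n_def by blast
  have "mtrace \<rho> = 1" using rho unfolding density_def by blast
  then have "\<rho> $$ (0,0) + \<rho> $$ (1,1) + \<rho> $$ (2,2) + \<rho> $$ (3,3) = 1"
    unfolding mtrace_def using rc by (simp add: sum4)
  then have "mtrace (ampl \<Lambda> 2 \<rho>) = 1"
    using ampl_trace[of \<Lambda> \<rho>] c unfolding cptp_def by simp
  then have "(\<Sum>i<4. ampl \<Lambda> 2 \<rho> $$ (i, i)) = 1" unfolding mtrace_def by simp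
  then show "(\<Sum>i<4. Re (ampl \<Lambda> 2 \<rho> $$ (i, i))) = 1" by (metis Re_sum one_complex.sel(1))
qed

definition sfun :: "complex mat \<Rightarrow> (bool list \<Rightarrow> complex mat \<Rightarrow> complex mat) \<Rightarrow> bool list \<Rightarrow> nat \<Rightarrow> nat \<Rightarrow> complex" where
  "sfun \<rho> \<Lambda> x = (\<lambda>i k. ampl (\<Lambda> x) 2 \<rho> $$ (i, k))"

definition Ofun :: "(nat \<Rightarrow> bool \<Rightarrow> complex mat) \<Rightarrow> nat \<Rightarrow> nat \<Rightarrow> nat \<Rightarrow> complex" where
  "Ofun Pm y = (\<lambda>k i. 2 * Pm y False $$ (k, i) - (if k = i then 1 else 0))"

definition core_expr :: "(bool list \<Rightarrow> nat \<Rightarrow> nat \<Rightarrow> complex) \<Rightarrow> (nat \<Rightarrow> nat \<Rightarrow> nat \<Rightarrow> complex) \<Rightarrow> real" where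
  "core_expr sf Of =
         (1 * TT (sf [False,False,False]) (Of 1) + 1 * TT (sf [False,False,False]) (Of 2) + 1 * TT (sf [False,False,False]) (Of 3)
          - (1 * TT (sf [True,True,True]) (Of 1) + 1 * TT (sf [True,True,True]) (Of 2) + 1 * TT (sf [True,True,True]) (Of 3)))
       + (1 * TT (sf [False,False,True]) (Of 1) + 1 * TT (sf [False,False,True]) (Of 2) + (-1) * TT (sf [False,False,True]) (Of 3)
          - (1 * TT (sf [True,True,False]) (Of 1) + 1 * TT (sf [True,True,False]) (Of 2) + (-1) * TT (sf [True,True,False]) (Of 3)))
       + (1 * TT (sf [False,True,False]) (Of 1) + (-1) * TT (sf [False,True,False]) (Of 2) + 1 * TT (sf [False,True,False]) (Of 3)
          - (1 * TT (sf [True,False,True]) (Of 1) + (-1) * TT (sf [True,False,True]) (Of 2) + 1 * TT (sf [True,False,True]) (Of 3)))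
       + (1 * TT (sf [False,True,True]) (Of 1) + (-1) * TT (sf [False,True,True]) (Of 2) + (-1) * TT (sf [False,True,True]) (Of 3)
          - (1 * TT (sf [True,False,False]) (Of 1) + (-1) * TT (sf [True,False,False]) (Of 2) + (-1) * TT (sf [True,False,False]) (Of 3)))"

lemma success_expand:
  assumes V: "valid_strategy \<rho> \<Lambda> Pm"
  shows "success \<rho> \<Lambda> Pm = (1/24) * (12 + (1/2) * core_expr (sfun \<rho> \<Lambda>) (Ofun Pm))"
proof -
  have rho: "density 4 \<rho>" and cL: "\<And>x. length x = 3 \<Longrightarrow> cptp (\<Lambda> x)"
    and PM: "\<And>y. y \<in> {1..3} \<Longrightarrow> proj_meas 4 (Pm y)"
    using V unfolding valid_strategy_def by auto
  define sf where "sf = sfun \<rho> \<Lambda>"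
  define Of where "Of = Ofun Pm"
  have TE: "\<And>x y. length x = 3 \<Longrightarrow> y \<in> {1..3} \<Longrightarrow> Re (mtrace (ampl (\<Lambda> x) 2 \<rho> * Pm y (x ! (y-1))))
      = 1/2 + (if x ! (y-1) then -1 else 1) / 2 * TT (sf x) (Of y)"
  proof -
    fix x :: "bool list" and y :: nat assume x: "length x = 3" and y: "y \<in> {1..3}"
    note sg = sigma_good[OF rho cL[OF x]]
    have pm: "proj_meas 4 (Pm y)" using PM[OF y] .
    have c0: "Pm y False \<in> carrier_mat 4 4" and c1: "Pm y True \<in> carrier_mat 4 4" and ps: "Pm y False + Pm y True = 1\<^sub>m 4"
      using pm unfolding proj_meas_def projector_def hermitian_n_def by auto
    show "?thesis x y" unfolding sf_def Of_def sfun_def Ofun_def by (rule term_expand[OF sg(1) sg(3) c0 c1 ps])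
  qed
  have "success \<rho> \<Lambda> Pm = (1/24) * (\<Sum>y\<in>{1..3::nat}. \<Sum>x\<in>{xs::bool list. length xs = 3}.
       1/2 + (if x ! (y-1) then -1 else 1) / 2 * TT (sf x) (Of y))"
    unfolding success_def by (intro arg_cong[where f = "\<lambda>z. (1/24) * z"] sum.cong refl) (rule TE, auto)
  also have "\<dots> = (1/24) * (12 + (1/2) * core_expr sf Of)"
    unfolding Y3_sum X3_sum core_expr_def by simp
  finally show ?thesis unfolding sf_def Of_def .
qed

lemma upper_bound:
  assumes V: "valid_strategy \<rho> \<Lambda> Pm"
  shows "success \<rho> \<Lambda> Pm \<le> 1/2 + 1 / sqrt 6"
proof -
  have rho: "density 4 \<rho>" and cL: "\<And>x. length x = 3 \<Longrightarrow> cptp (\<Lambda> x)"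
    and PM: "\<And>y. y \<in> {1..3} \<Longrightarrow> proj_meas 4 (Pm y)"
    using V unfolding valid_strategy_def by auto
  define sf where "sf = sfun \<rho> \<Lambda>"
  define Of where "Of = Ofun Pm"
  have "success \<rho> \<Lambda> Pm = (1/24) * (12 + (1/2) * core_expr sf Of)"
    unfolding sf_def Of_def by (rule success_expand[OF V])
  also have "\<dots> \<le> (1/24) * (12 + (1/2) * (8 * sqrt 6))"
  proof -
    have sgx: "\<And>x. length x = 3 \<Longrightarrow> psdf 4 (sf x) \<and> (\<Sum>i<4. Re (sf x i i)) = 1"
      unfolding sf_def sfun_def using sigma_good[OF rho cL] by blast
    have nO: "\<And>y. y \<in> {1..3} \<Longrightarrow> (\<Sum>i<4. \<Sum>k<4. (cmod (Of y k i))^2) = 4"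
    proof -
      fix y :: nat assume y: "y \<in> {1..3}"
      have "projector 4 (Pm y False)" using PM[OF y] unfolding proj_meas_def by blast
      from projector_norm[OF this] show "?thesis y" unfolding Of_def Ofun_def by simp
    qed
    note cb = core_bound[OF sgx[of "[False,False,False]", THEN conjunct1] sgx[of "[False,False,True]", THEN conjunct1]
      sgx[of "[False,True,False]", THEN conjunct1] sgx[of "[False,True,True]", THEN conjunct1]
      sgx[of "[True,True,True]", THEN conjunct1] sgx[of "[True,True,False]", THEN conjunct1]
      sgx[of "[True,False,True]", THEN conjunct1] sgx[of "[True,False,False]", THEN conjunct1]
      sgx[of "[False,False,False]", THEN conjunct2] sgx[of "[False,False,True]", THEN conjunct2]
      sgx[of "[False,True,False]", THEN conjunct2] sgx[of "[False,True,True]", THEN conjunct2]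
      sgx[of "[True,True,True]", THEN conjunct2] sgx[of "[True,True,False]", THEN conjunct2]
      sgx[of "[True,False,True]", THEN conjunct2] sgx[of "[True,False,False]", THEN conjunct2]
      nO[of 1] nO[of 2] nO[of 3]]
    have "core_expr sf Of \<le> 8 * sqrt 6" unfolding core_expr_def using cb by simp
    then show ?thesis by simp
  qed
  also have "\<dots> = 1/2 + 1 / sqrt 6"
  proof -
    have "sqrt 6 * sqrt 6 = (6::real)" by simp
    then have "1 / sqrt 6 = sqrt 6 / 6" by (simp add: field_simps)
    then show ?thesis by simp
  qed
  finally show ?thesis .
qed

lemma congr_form:
  fixes W :: "nat \<Rightarrow> nat \<Rightarrow> complex" and M :: "nat \<Rightarrow> nat \<Rightarrow> complex"
  shows "(\<Sum>r\<in>R. \<Sum>s\<in>R. cnj (v r) * (\<Sum>a\<in>A. \<Sum>b\<in>A. W r a * M a b * cnj (W s b)) * v s)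
       = (\<Sum>a\<in>A. \<Sum>b\<in>A. cnj (\<Sum>r\<in>R. cnj (W r a) * v r) * M a b * (\<Sum>s\<in>R. cnj (W s b) * v s))"
proof -
  have "(\<Sum>r\<in>R. \<Sum>s\<in>R. cnj (v r) * (\<Sum>a\<in>A. \<Sum>b\<in>A. W r a * M a b * cnj (W s b)) * v s)
      = (\<Sum>r\<in>R. \<Sum>s\<in>R. \<Sum>a\<in>A. \<Sum>b\<in>A. cnj (v r) * W r a * M a b * cnj (W s b) * v s)"
    by (simp add: sum_distrib_left sum_distrib_right mult.assoc)
  also have "\<dots> = (\<Sum>r\<in>R. \<Sum>a\<in>A. \<Sum>s\<in>R. \<Sum>b\<in>A. cnj (v r) * W r a * M a b * cnj (W s b) * v s)"
    by (rule sum.cong[OF refl], rule sum.swap)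
  also have "\<dots> = (\<Sum>a\<in>A. \<Sum>r\<in>R. \<Sum>s\<in>R. \<Sum>b\<in>A. cnj (v r) * W r a * M a b * cnj (W s b) * v s)"
    by (rule sum.swap)
  also have "\<dots> = (\<Sum>a\<in>A. \<Sum>r\<in>R. \<Sum>b\<in>A. \<Sum>s\<in>R. cnj (v r) * W r a * M a b * cnj (W s b) * v s)"
    by (rule sum.cong[OF refl], rule sum.cong[OF refl], rule sum.swap)
  also have "\<dots> = (\<Sum>a\<in>A. \<Sum>b\<in>A. \<Sum>r\<in>R. \<Sum>s\<in>R. cnj (v r) * W r a * M a b * cnj (W s b) * v s)"
    by (rule sum.cong[OF refl], rule sum.swap)
  also have "\<dots> = (\<Sum>a\<in>A. \<Sum>b\<in>A. cnj (\<Sum>r\<in>R. cnj (W r a) * v r) * M a b * (\<Sum>s\<in>R. cnj (W s b) * v s))"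
    by (simp add: sum_distrib_left sum_distrib_right mult.commute mult.left_commute)
  finally show ?thesis .
qed

lemma sum_2k: "(\<Sum>p<2*(k::nat). f p) = (\<Sum>p<k. f p) + (\<Sum>p<k. f (k + p))"
proof -
  have "{..<2*k} = {..<k} \<union> {k..<k+k}" by auto
  then have "(\<Sum>p<2*k. f p) = (\<Sum>p<k. f p) + (\<Sum>p\<in>{k..<k+k}. f p)"
    by (simp add: sum.union_disjoint ivl_disj_int(2))
  also have "(\<Sum>p\<in>{k..<k+k}. f p) = (\<Sum>p<k. f (k + p))"
    using sum.shift_bounds_nat_ivl[of f 0 k k] by (simp add: lessThan_atLeast0 add.commute)
  finally show ?thesis .
qed

lemma reindex_sel:
  fixes X :: "nat \<Rightarrow> complex" and g :: "nat \<Rightarrow> complex"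
  assumes i: "i < k"
  shows "(\<Sum>p<2*k. (if p mod k = i then X (p div k) else 0) * g p) = X 0 * g i + X 1 * g (k + i)"
proof -
  have k: "0 < k" using i by simp
  have "(\<Sum>p<k. (if p mod k = i then X (p div k) else 0) * g p) = (\<Sum>p<k. (if p = i then X 0 else 0) * g p)"
    by (intro sum.cong refl) auto
  also have "\<dots> = X 0 * g i" using sum_delta_nat[OF i] by simp
  finally have 1: "(\<Sum>p<k. (if p mod k = i then X (p div k) else 0) * g p) = X 0 * g i" .
  have "(\<Sum>p<k. (if (k + p) mod k = i then X ((k + p) div k) else 0) * g (k + p)) = (\<Sum>p<k. (if p = i then X 1 else 0) * g (k + p))"
    using k by (intro sum.cong refl) auto
  also have "\<dots> = X 1 * g (k + i)" using sum_delta_nat[OF i, of "X 1" "\<lambda>p. g (k + p)"] by simp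
  finally have 2: "(\<Sum>p<k. (if (k + p) mod k = i then X ((k + p) div k) else 0) * g (k + p)) = X 1 * g (k + i)" .
  show ?thesis unfolding sum_2k 1 2 ..
qed

definition chan :: "(nat \<Rightarrow> nat \<Rightarrow> complex) \<Rightarrow> complex mat \<Rightarrow> complex mat" where
  "chan U A = mat 2 2 (\<lambda>(i, j). \<Sum>a<2. \<Sum>b<2. U i a * A $$ (a, b) * cnj (U j b))"

lemma ampl_chan_W:
  fixes U :: "nat \<Rightarrow> nat \<Rightarrow> complex"
  assumes r: "r < 2*k" and s: "s < 2*k"
  defines "W \<equiv> (\<lambda>r p. if p mod k = r mod k then U (r div k) (p div k) else 0)"
  shows "ampl (chan U) k M $$ (r, s) = (\<Sum>p<2*k. \<Sum>q<2*k. W r p * M $$ (p, q) * cnj (W s q))"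
proof -
  have k: "0 < k" using r by simp
  have rm: "r mod k < k" and sm: "s mod k < k" using k by auto
  have rd: "r div k < 2" and sd: "s div k < 2" using r s k by (auto simp: less_mult_imp_div_less mult.commute)
  have "ampl (chan U) k M $$ (r, s) = (\<Sum>a<2. \<Sum>b<2. U (r div k) a * M $$ (a*k + r mod k, b*k + s mod k) * cnj (U (s div k) b))"
    unfolding ampl_entry[OF r s] chan_def blk_def using rd sd by simp
  also have "\<dots> = (\<Sum>a<2. U (r div k) a * (\<Sum>b<2. cnj (U (s div k) b) * M $$ (a*k + r mod k, b*k + s mod k)))"
    by (simp add: sum_distrib_left algebra_simps)
  also have "\<dots> = (\<Sum>a<2. U (r div k) a * (\<Sum>q<2*k. (if q mod k = s mod k then cnj (U (s div k) (q div k)) else 0) * M $$ (a*k + r mod k, q)))"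
  proof -
    have inner: "\<And>a. (\<Sum>q<2*k. (if q mod k = s mod k then cnj (U (s div k) (q div k)) else 0) * M $$ (a*k + r mod k, q))
       = cnj (U (s div k) 0) * M $$ (a*k + r mod k, s mod k) + cnj (U (s div k) 1) * M $$ (a*k + r mod k, k + s mod k)"
      using reindex_sel[OF sm, of "\<lambda>c. cnj (U (s div k) c)"] by simp
    show ?thesis unfolding inner by (simp add: sum2)
  qed
  also have "\<dots> = (\<Sum>p<2*k. (if p mod k = r mod k then U (r div k) (p div k) else 0) *
          (\<Sum>q<2*k. (if q mod k = s mod k then cnj (U (s div k) (q div k)) else 0) * M $$ (p, q)))"
  proof -
    have outer: "(\<Sum>p<2*k. (if p mod k = r mod k then U (r div k) (p div k) else 0) *
          (\<Sum>q<2*k. (if q mod k = s mod k then cnj (U (s div k) (q div k)) else 0) * M $$ (p, q)))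
       = U (r div k) 0 * (\<Sum>q<2*k. (if q mod k = s mod k then cnj (U (s div k) (q div k)) else 0) * M $$ (r mod k, q))
       + U (r div k) 1 * (\<Sum>q<2*k. (if q mod k = s mod k then cnj (U (s div k) (q div k)) else 0) * M $$ (k + r mod k, q))"
      using reindex_sel[OF rm, of "\<lambda>c. U (r div k) c" "\<lambda>p. (\<Sum>q<2*k. (if q mod k = s mod k then cnj (U (s div k) (q div k)) else 0) * M $$ (p, q))"] by simp
    show ?thesis unfolding outer by (simp add: sum2)
  qed
  also have "\<dots> = (\<Sum>p<2*k. \<Sum>q<2*k. W r p * M $$ (p, q) * cnj (W s q))"
    unfolding W_def sum_distrib_left by (intro sum.cong refl) auto
  finally show ?thesis .
qed

lemma chan_CP: "completely_positive (chan U)"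
  unfolding completely_positive_def
proof (intro allI impI)
  fix k :: nat and M :: "complex mat"
  assume M: "psd (2*k) M"
  define W where "W = (\<lambda>r p. if p mod k = r mod k then U (r div k) (p div k) else 0)"
  have E: "\<And>r s. r < 2*k \<Longrightarrow> s < 2*k \<Longrightarrow> ampl (chan U) k M $$ (r, s) = (\<Sum>p<2*k. \<Sum>q<2*k. W r p * M $$ (p, q) * cnj (W s q))"
    unfolding W_def by (rule ampl_chan_W)
  have Mh: "\<And>p q. p < 2*k \<Longrightarrow> q < 2*k \<Longrightarrow> M $$ (p, q) = cnj (M $$ (q, p))"
    using M unfolding psd_def hermitian_n_def by blast
  have herm: "\<And>r s. r < 2*k \<Longrightarrow> s < 2*k \<Longrightarrow> ampl (chan U) k M $$ (r, s) = cnj (ampl (chan U) k M $$ (s, r))"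
  proof -
    fix r s assume r: "r < 2*k" and s: "s < 2*k"
    have "cnj (ampl (chan U) k M $$ (s, r)) = (\<Sum>p<2*k. \<Sum>q<2*k. cnj (W s p) * cnj (M $$ (p, q)) * W r q)"
      unfolding E[OF s r] by simp
    also have "\<dots> = (\<Sum>p<2*k. \<Sum>q<2*k. W r q * M $$ (q, p) * cnj (W s p))"
    proof (intro sum.cong refl)
      fix p q assume "p \<in> {..<2*k}" "q \<in> {..<2*k}"
      then have "cnj (M $$ (p, q)) = M $$ (q, p)" using Mh[of q p] by simp
      then show "cnj (W s p) * cnj (M $$ (p, q)) * W r q = W r q * M $$ (q, p) * cnj (W s p)" by simp
    qed
    also have "\<dots> = (\<Sum>q<2*k. \<Sum>p<2*k. W r q * M $$ (q, p) * cnj (W s p))"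
      by (rule sum.swap)
    finally show "ampl (chan U) k M $$ (r, s) = cnj (ampl (chan U) k M $$ (s, r))" unfolding E[OF r s] by simp
  qed
  show "psd (2*k) (ampl (chan U) k M)"
    unfolding psd_def hermitian_n_def
  proof (intro conjI allI impI)
    show "ampl (chan U) k M \<in> carrier_mat (2*k) (2*k)" by simp
  next
    fix r s assume "r < 2*k" "s < 2*k"
    then show "ampl (chan U) k M $$ (r, s) = cnj (ampl (chan U) k M $$ (s, r))" by (rule herm)
  next
    fix v :: "nat \<Rightarrow> complex"
    have "(\<Sum>r<2*k. \<Sum>s<2*k. cnj (v r) * ampl (chan U) k M $$ (r, s) * v s)
        = (\<Sum>r<2*k. \<Sum>s<2*k. cnj (v r) * (\<Sum>p<2*k. \<Sum>q<2*k. W r p * M $$ (p, q) * cnj (W s q)) * v s)"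
      by (intro sum.cong refl) (simp add: E)
    also have "\<dots> = (\<Sum>p<2*k. \<Sum>q<2*k. cnj (\<Sum>r<2*k. cnj (W r p) * v r) * M $$ (p, q) * (\<Sum>s<2*k. cnj (W s q) * v s))"
      by (rule congr_form)
    finally have eq: "(\<Sum>r<2*k. \<Sum>s<2*k. cnj (v r) * ampl (chan U) k M $$ (r, s) * v s) = (\<Sum>p<2*k. \<Sum>q<2*k. cnj (\<Sum>r<2*k. cnj (W r p) * v r) * M $$ (p, q) * (\<Sum>s<2*k. cnj (W s q) * v s))" .
    have "0 \<le> Re (\<Sum>p<2*k. \<Sum>q<2*k. cnj ((\<lambda>p. \<Sum>r<2*k. cnj (W r p) * v r) p) * M $$ (p, q) * ((\<lambda>p. \<Sum>r<2*k. cnj (W r p) * v r) q))"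
    proof -
      have "\<forall>v. 0 \<le> Re (\<Sum>i<2*k. \<Sum>j<2*k. cnj (v i) * M $$ (i, j) * v j)" using M unfolding psd_def by blast
      from this[rule_format, of "\<lambda>p. \<Sum>r<2*k. cnj (W r p) * v r"] show ?thesis by simp
    qed
    then show "0 \<le> Re (\<Sum>r<2*k. \<Sum>s<2*k. cnj (v r) * ampl (chan U) k M $$ (r, s) * v s)"
      unfolding eq by simp
  qed
qed

definition unit2 :: "(nat \<Rightarrow> nat \<Rightarrow> complex) \<Rightarrow> bool" where
  "unit2 U \<longleftrightarrow> (\<forall>a<2. \<forall>b<2. (\<Sum>i<2. U i a * cnj (U i b)) = (if a = b then 1 else 0))"

lemma chan_linear: "qubit_linear (chan U)"
  unfolding qubit_linear_def
proof (intro conjI ballI allI)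
  fix A :: "complex mat" assume "A \<in> carrier_mat 2 2"
  show "chan U A \<in> carrier_mat 2 2" unfolding chan_def by simp
next
  fix A B :: "complex mat" assume A: "A \<in> carrier_mat 2 2" and B: "B \<in> carrier_mat 2 2"
  show "chan U (A + B) = chan U A + chan U B"
  proof (rule eq_matI)
    fix i j assume "i < dim_row (chan U A + chan U B)" "j < dim_col (chan U A + chan U B)"
    then have i: "i < 2" and j: "j < 2" unfolding chan_def by auto
    show "chan U (A + B) $$ (i, j) = (chan U A + chan U B) $$ (i, j)"
      using i j A B unfolding chan_def by (simp add: sum2 algebra_simps)
  qed (auto simp: chan_def)
next
  fix A :: "complex mat" and c :: complex assume A: "A \<in> carrier_mat 2 2"
  show "chan U (c \<cdot>\<^sub>m A) = c \<cdot>\<^sub>m chan U A"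
  proof (rule eq_matI)
    fix i j assume "i < dim_row (c \<cdot>\<^sub>m chan U A)" "j < dim_col (c \<cdot>\<^sub>m chan U A)"
    then have i: "i < 2" and j: "j < 2" unfolding chan_def by auto
    show "chan U (c \<cdot>\<^sub>m A) $$ (i, j) = (c \<cdot>\<^sub>m chan U A) $$ (i, j)"
      using i j A unfolding chan_def by (simp add: sum2 algebra_simps)
  qed (auto simp: chan_def)
qed

lemma chan_TP:
  assumes U: "unit2 U"
  shows "trace_preserving (chan U)"
  unfolding trace_preserving_def
proof
  fix A :: "complex mat" assume A: "A \<in> carrier_mat 2 2"
  have X: "\<And>a b. a < 2 \<Longrightarrow> b < 2 \<Longrightarrow> U 0 a * cnj (U 0 b) + U 1 a * cnj (U 1 b) = (if a = b then 1 else 0)"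
    using U unfolding unit2_def by (simp add: sum2)
  have "mtrace (chan U A) = A $$ (0,0) * (U 0 0 * cnj (U 0 0) + U 1 0 * cnj (U 1 0))
      + A $$ (0,1) * (U 0 0 * cnj (U 0 1) + U 1 0 * cnj (U 1 1))
      + A $$ (1,0) * (U 0 1 * cnj (U 0 0) + U 1 1 * cnj (U 1 0))
      + A $$ (1,1) * (U 0 1 * cnj (U 0 1) + U 1 1 * cnj (U 1 1))"
    unfolding mtrace_def chan_def by (simp add: sum2 algebra_simps)
  also have "\<dots> = A $$ (0,0) + A $$ (1,1)" using X[of 0 0] X[of 0 1] X[of 1 0] X[of 1 1] by simp
  also have "\<dots> = mtrace A" unfolding mtrace_def using A by (simp add: sum2)
  finally show "mtrace (chan U A) = mtrace A" .
qed

lemma chan_cptp: "unit2 U \<Longrightarrow> cptp (chan U)"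
  unfolding cptp_def using chan_linear chan_CP chan_TP by blast

definition Kl :: "nat \<Rightarrow> complex list list" where
  "Kl y = (if y = 1 then [[0, 0, -1, Complex 2 (-1)], [0, 0, Complex 2 1, 1], [-1, Complex 2 (-1), 0, 0], [Complex 2 1, 1, 0, 0]]
     else if y = 2 then [[0, 0, \<i>, Complex 2 1], [0, 0, Complex (-2) 1, - \<i>], [- \<i>, Complex (-2) (-1), 0, 0], [Complex 2 (-1), \<i>, 0, 0]]
     else [[2, Complex (-1) (-1), 0, 0], [Complex (-1) 1, -2, 0, 0], [0, 0, -2, Complex 1 1], [0, 0, Complex 1 (-1), 2]])"

definition KK :: "nat \<Rightarrow> nat \<Rightarrow> nat \<Rightarrow> complex" where
  "KK y i j = Kl y ! i ! j"

lemma KK_sq: "y \<in> {1,2,3} \<Longrightarrow> i < 4 \<Longrightarrow> j < 4 \<Longrightarrow> (\<Sum>k<4. KK y i k * KK y k j) = (if i = j then 6 else 0)"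
  by (auto simp: KK_def Kl_def sum4 complex_eq_iff less_Suc_eq numeral_eq_Suc)

lemma KK_herm: "y \<in> {1,2,3} \<Longrightarrow> i < 4 \<Longrightarrow> j < 4 \<Longrightarrow> KK y i j = cnj (KK y j i)"
  by (auto simp: KK_def Kl_def complex_eq_iff less_Suc_eq numeral_eq_Suc)

definition Pm0 :: "nat \<Rightarrow> bool \<Rightarrow> complex mat" where
  "Pm0 y b = mat 4 4 (\<lambda>(i, j). (if i = j then 1/2 else 0) + complex_of_real ((if b then -1 else 1) / (2 * sqrt 6)) * KK y i j)"

lemma idem_abstract:
  fixes K :: "nat \<Rightarrow> nat \<Rightarrow> complex" and c :: real
  assumes i: "i < n" and j: "j < n" and Ksq: "(\<Sum>k<n. K i k * K k j) = (if i = j then 6 else 0)" and c: "c * c = 1/24"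
  shows "(\<Sum>k<n. ((if i = k then 1/2 else 0) + complex_of_real c * K i k) * ((if k = j then 1/2 else 0) + complex_of_real c * K k j))
       = (if i = j then 1/2 else 0) + complex_of_real c * K i j"
proof -
  have "(\<Sum>k<n. ((if i = k then 1/2 else 0) + complex_of_real c * K i k) * ((if k = j then 1/2 else 0) + complex_of_real c * K k j))
     = (\<Sum>k<n. (if k = i then 1/2 else 0) * (if k = j then 1/2 else 0)) + (\<Sum>k<n. (if k = i then 1/2 else 0) * (complex_of_real c * K k j))
       + (\<Sum>k<n. (complex_of_real c * K i k) * (if k = j then 1/2 else 0)) + complex_of_real (c * c) * (\<Sum>k<n. K i k * K k j)"
    by (simp add: sum.distrib sum_distrib_left algebra_simps eq_commute[of i])
  also have "\<dots> = (if i = j then 1/4 else 0) + complex_of_real c * K i j / 2 + complex_of_real c * K i j / 2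
       + complex_of_real (c * c) * (if i = j then 6 else 0)"
  proof -
    have s1: "(\<Sum>k<n. (if k = i then 1/2 else 0) * (if k = j then 1/2 else 0)) = (if i = j then 1/4 else (0::complex))"
    proof -
      have "(\<Sum>k<n. (if k = i then 1/2 else 0) * (if k = j then 1/2 else 0)) = (\<Sum>k<n. if k = i then (if i = j then 1/4 else 0) else (0::complex))"
        by (rule sum.cong) auto
      also have "\<dots> = (if i = j then 1/4 else 0)" using i by (simp add: sum.delta')
      finally show ?thesis .
    qed
    have s2: "(\<Sum>k<n. (if k = i then 1/2 else 0) * (complex_of_real c * K k j)) = complex_of_real c * K i j / 2"
      using sum_delta_nat[OF i, of "1/2" "\<lambda>k. complex_of_real c * K k j"] by simp
    have s3: "(\<Sum>k<n. (complex_of_real c * K i k) * (if k = j then 1/2 else 0)) = complex_of_real c * K i j / 2"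
      using sum_delta_nat'[OF j, of "\<lambda>k. complex_of_real c * K i k" "1/2"] by simp
    show ?thesis unfolding s1 s2 s3 Ksq ..
  qed
  also have "\<dots> = (if i = j then 1/2 else 0) + complex_of_real c * K i j"
  proof -
    have "complex_of_real (c * c) = complex_of_real (1/24)" using c by (simp only:)
    then have z: "complex_of_real (c * c) = 1/24" by simp
    show ?thesis by (simp only: z) (auto simp: field_simps)
  qed
  finally show ?thesis .
qed

lemma Pm0_meas: "y \<in> {1,2,3} \<Longrightarrow> proj_meas 4 (Pm0 y)"
proof -
  assume y: "y \<in> {1,2,3}"
  have proj: "projector 4 (Pm0 y b)" for b
  proof -
    define c :: real where "c = (if b then -1 else 1) / (2 * sqrt 6)"
    have cc: "c * c = 1/24" unfolding c_def by (simp add: field_simps)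
    have e: "\<And>i j. i < 4 \<Longrightarrow> j < 4 \<Longrightarrow> Pm0 y b $$ (i, j) = (if i = j then 1/2 else 0) + complex_of_real c * KK y i j"
      unfolding Pm0_def c_def by simp
    have car: "Pm0 y b \<in> carrier_mat 4 4" unfolding Pm0_def by simp
    show ?thesis unfolding projector_def hermitian_n_def
    proof (intro conjI allI impI car)
      fix i j :: nat assume i: "i < 4" and j: "j < 4"
      show "Pm0 y b $$ (i, j) = cnj (Pm0 y b $$ (j, i))" unfolding e[OF i j] e[OF j i] using KK_herm[OF y i j] by simp
    next
      show "Pm0 y b * Pm0 y b = Pm0 y b"
      proof (rule eq_matI)
        fix i j assume "i < dim_row (Pm0 y b)" "j < dim_col (Pm0 y b)"
        then have i: "i < 4" and j: "j < 4" using car by auto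
        have "(Pm0 y b * Pm0 y b) $$ (i, j) = (\<Sum>k<4. Pm0 y b $$ (i, k) * Pm0 y b $$ (k, j))"
          by (rule mult_entry[OF car car i j])
        also have "\<dots> = (\<Sum>k<4. ((if i = k then 1/2 else 0) + complex_of_real c * KK y i k) * ((if k = j then 1/2 else 0) + complex_of_real c * KK y k j))"
          by (intro sum.cong refl) (simp add: e i j)
        also have "\<dots> = Pm0 y b $$ (i, j)" unfolding e[OF i j] by (rule idem_abstract[OF i j KK_sq[OF y i j] cc])
        finally show "(Pm0 y b * Pm0 y b) $$ (i, j) = Pm0 y b $$ (i, j)" .
      qed (use car in auto)
    qed
  qed
  have sum: "Pm0 y False + Pm0 y True = 1\<^sub>m 4"
    by (rule eq_matI) (auto simp: Pm0_def)
  show ?thesis unfolding proj_meas_def using proj sum by blast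
qed

definition rho0 :: "complex mat" where
  "rho0 = mat 4 4 (\<lambda>(i, j). if (i = 0 \<or> i = 3) \<and> (j = 0 \<or> j = 3) then 1/2 else 0)"

lemma rho0_density: "density 4 rho0"
proof -
  have car: "rho0 \<in> carrier_mat 4 4" unfolding rho0_def by simp
  have herm: "hermitian_n 4 rho0" unfolding hermitian_n_def rho0_def by auto
  have form: "0 \<le> Re (\<Sum>i<4. \<Sum>j<4. cnj (v i) * rho0 $$ (i, j) * v j)" for v
  proof -
    have "(\<Sum>i<4. \<Sum>j<4. cnj (v i) * rho0 $$ (i, j) * v j) = 1/2 * (cnj (v 0 + v 3) * (v 0 + v 3))"
      unfolding rho0_def by (simp add: sum4 algebra_simps)
    also have "\<dots> = complex_of_real (1/2 * (cmod (v 0 + v 3))^2)"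
      using complex_norm_square[of "v 0 + v 3"] by (simp add: mult.commute)
    finally have eq: "(\<Sum>i<4. \<Sum>j<4. cnj (v i) * rho0 $$ (i, j) * v j) = complex_of_real (1/2 * (cmod (v 0 + v 3))^2)" .
    show ?thesis unfolding eq Re_complex_of_real by simp
  qed
  have tr: "mtrace rho0 = 1" unfolding mtrace_def rho0_def by (simp add: sum4)
  show ?thesis unfolding density_def psd_def using herm form tr by blast
qed

definition Uq :: "real \<Rightarrow> real \<Rightarrow> real \<Rightarrow> real \<Rightarrow> nat \<Rightarrow> nat \<Rightarrow> complex" where
  "Uq a b c d i j = (if i = 0 then (if j = 0 then Complex a d else Complex c b)
                     else (if j = 0 then Complex (-c) b else Complex a (-d)))"

definition Us :: "real \<Rightarrow> real \<Rightarrow> real \<Rightarrow> real \<Rightarrow> real \<Rightarrow> nat \<Rightarrow> nat \<Rightarrow> complex" where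
  "Us t a b c d i j = complex_of_real t * Uq a b c d i j"

lemma Us_unit:
  assumes "t * t * (a * a + b * b + c * c + d * d) = 1"
  shows "unit2 (Us t a b c d)"
  unfolding unit2_def
proof (intro allI impI)
  fix i j :: nat assume i: "i < 2" and j: "j < 2"
  have tt: "complex_of_real t * complex_of_real t * (complex_of_real a * complex_of_real a + complex_of_real b * complex_of_real b
       + complex_of_real c * complex_of_real c + complex_of_real d * complex_of_real d) = 1"
    using arg_cong[OF assms, of complex_of_real] by simp
  have "i = 0 \<or> i = 1" "j = 0 \<or> j = 1" using i j by auto
  then show "(\<Sum>k<2. Us t a b c d k i * cnj (Us t a b c d k j)) = (if i = j then 1 else 0)"
    unfolding Us_def Uq_def sum2 using tt by (auto simp: Complex_eq algebra_simps)
qed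

lemma sigma_rho0:
  assumes r: "r < 4" and s: "s < 4"
  shows "ampl (chan U) 2 rho0 $$ (r, s) = 1/2 * U (r div 2) (r mod 2) * cnj (U (s div 2) (s mod 2))"
proof -
  have r': "r < 2*2" and s': "s < 2*2" using r s by auto
  have "r = 0 \<or> r = 1 \<or> r = 2 \<or> r = 3" "s = 0 \<or> s = 1 \<or> s = 2 \<or> s = 3" using r s by auto
  then show ?thesis unfolding ampl_entry[OF r' s'] chan_def blk_def rho0_def
    by (auto simp: sum2)
qed

definition gval :: "real \<Rightarrow> real \<Rightarrow> real \<Rightarrow> real \<Rightarrow> nat \<Rightarrow> real" where
  "gval a b c d y = Re (\<Sum>i<4. \<Sum>k<4. Uq a b c d (i div 2) (i mod 2) * cnj (Uq a b c d (k div 2) (k mod 2)) * KK y k i)"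

lemma TT_Us:
  "TT (\<lambda>i k. ampl (chan (Us t a b c d)) 2 rho0 $$ (i, k)) (\<lambda>k i. complex_of_real \<beta> * KK y k i)
   = t * t * \<beta> / 2 * gval a b c d y"
proof -
  have "TT (\<lambda>i k. ampl (chan (Us t a b c d)) 2 rho0 $$ (i, k)) (\<lambda>k i. complex_of_real \<beta> * KK y k i)
     = Re (\<Sum>i<4. \<Sum>k<4. complex_of_real (t * t * \<beta> / 2) * (Uq a b c d (i div 2) (i mod 2) * cnj (Uq a b c d (k div 2) (k mod 2)) * KK y k i))"
    unfolding TT_def by (intro arg_cong[where f = Re] sum.cong refl) (simp add: sigma_rho0 Us_def)
  also have "\<dots> = t * t * \<beta> / 2 * gval a b c d y"
    unfolding gval_def sum_distrib_left[symmetric] by simp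
  finally show ?thesis .
qed


lemma gvals:
  "gval 1 0 0 0 1 = 4"
  "gval 1 0 0 0 2 = 4"
  "gval 1 0 0 0 3 = 4"
  "gval 0 1 0 0 1 = 4"
  "gval 0 1 0 0 2 = (-4)"
  "gval 0 1 0 0 3 = (-4)"
  "gval 0 0 1 0 1 = (-4)"
  "gval 0 0 1 0 2 = 4"
  "gval 0 0 1 0 3 = (-4)"
  "gval 0 0 0 1 1 = (-4)"
  "gval 0 0 0 1 2 = (-4)"
  "gval 0 0 0 1 3 = 4"
  "gval 0 1 1 1 1 = (-12)"
  "gval 0 1 1 1 2 = (-12)"
  "gval 0 1 1 1 3 = (-12)"
  "gval 1 0 (-1) 1 1 = (-12)"
  "gval 1 0 (-1) 1 2 = 12"
  "gval 1 0 (-1) 1 3 = 12"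
  "gval 1 1 0 (-1) 1 = 12"
  "gval 1 1 0 (-1) 2 = (-12)"
  "gval 1 1 0 (-1) 3 = 12"
  "gval 1 (-1) 1 0 1 = 12"
  "gval 1 (-1) 1 0 2 = 12"
  "gval 1 (-1) 1 0 3 = (-12)"
  by (simp_all add: gval_def sum4 Uq_def KK_def Kl_def)

definition Ux :: "bool list \<Rightarrow> nat \<Rightarrow> nat \<Rightarrow> complex" where
  "Ux x = (if x = [False,False,False] then Us 1 1 0 0 0
     else if x = [False,True,True] then Us 1 0 1 0 0
     else if x = [True,False,True] then Us 1 0 0 1 0
     else if x = [True,True,False] then Us 1 0 0 0 1
     else if x = [True,True,True] then Us (1 / sqrt 3) 0 1 1 1
     else if x = [True,False,False] then Us (1 / sqrt 3) 1 0 (-1) 1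
     else if x = [False,True,False] then Us (1 / sqrt 3) 1 1 0 (-1)
     else if x = [False,False,True] then Us (1 / sqrt 3) 1 (-1) 1 0
     else Us 1 1 0 0 0)"

definition Lam0 :: "bool list \<Rightarrow> complex mat \<Rightarrow> complex mat" where
  "Lam0 x = chan (Ux x)"

lemma Ux_vals:
  "Ux [False,False,False] = Us 1 1 0 0 0"
  "Ux [False,True,True] = Us 1 0 1 0 0"
  "Ux [True,False,True] = Us 1 0 0 1 0"
  "Ux [True,True,False] = Us 1 0 0 0 1"
  "Ux [True,True,True] = Us (1 / sqrt 3) 0 1 1 1"
  "Ux [True,False,False] = Us (1 / sqrt 3) 1 0 (-1) 1"
  "Ux [False,True,False] = Us (1 / sqrt 3) 1 1 0 (-1)"
  "Ux [False,False,True] = Us (1 / sqrt 3) 1 (-1) 1 0"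
  by (simp_all add: Ux_def)

lemma Ux_unit: "unit2 (Ux x)"
proof -
  have s3: "1 / sqrt 3 * (1 / sqrt 3) = (1/3 :: real)" by (simp add: field_simps)
  show ?thesis unfolding Ux_def by (auto intro!: Us_unit simp: s3)
qed

lemma valid0: "valid_strategy rho0 Lam0 Pm0"
  unfolding valid_strategy_def
proof (intro conjI allI impI ballI)
  show "density 4 rho0" by (rule rho0_density)
next
  fix x :: "bool list" assume "length x = 3"
  show "cptp (Lam0 x)" unfolding Lam0_def by (rule chan_cptp[OF Ux_unit])
next
  fix y :: nat assume "y \<in> {1..3}"
  then have "y \<in> {1,2,3}" by auto
  then show "proj_meas 4 (Pm0 y)" by (rule Pm0_meas)
qed

lemma TT_Ofun0: "TT s (Ofun Pm0 y) = TT s (\<lambda>k i. complex_of_real (1 / sqrt 6) * KK y k i)"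
proof -
  have "\<And>k i. k < 4 \<Longrightarrow> i < 4 \<Longrightarrow> Ofun Pm0 y k i = complex_of_real (1 / sqrt 6) * KK y k i"
  proof -
    fix k i :: nat assume "k < 4" "i < 4"
    then have "Ofun Pm0 y k i = 2 * ((if k = i then 1/2 else 0) + complex_of_real (1 / (2 * sqrt 6)) * KK y k i) - (if k = i then 1 else 0)"
      unfolding Ofun_def Pm0_def by simp
    also have "\<dots> = complex_of_real (2 * (1 / (2 * sqrt 6))) * KK y k i" by simp
    also have "2 * (1 / (2 * sqrt 6)) = 1 / sqrt (6::real)" by simp
    finally show "Ofun Pm0 y k i = complex_of_real (1 / sqrt 6) * KK y k i" .
  qed
  then show ?thesis unfolding TT_def by (intro arg_cong[where f = Re] sum.cong refl) auto
qed

lemma success0: "success rho0 Lam0 Pm0 = 1/2 + 1 / sqrt 6"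
proof -
  have T: "\<And>x y. TT (sfun rho0 Lam0 x) (Ofun Pm0 y) = TT (\<lambda>i k. ampl (chan (Ux x)) 2 rho0 $$ (i, k)) (\<lambda>k i. complex_of_real (1 / sqrt 6) * KK y k i)"
    unfolding TT_Ofun0 sfun_def Lam0_def ..
  have s3: "1 / sqrt 3 * (1 / sqrt 3) = (1/3 :: real)" by (simp add: field_simps)
  have "core_expr (sfun rho0 Lam0) (Ofun Pm0) = 24 * (2 / sqrt 6)"
    unfolding core_expr_def T Ux_vals TT_Us gvals using s3 by simp
  then have "success rho0 Lam0 Pm0 = (1/24) * (12 + (1/2) * (24 * (2 / sqrt 6)))"
    using success_expand[OF valid0] by simp
  also have "\<dots> = 1/2 + 1 / sqrt 6" by simp
  finally show ?thesis .
qed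

theorem mainTheorem1:
  shows "(\<forall>\<rho> \<Lambda> Pm. valid_strategy \<rho> \<Lambda> Pm \<longrightarrow> success \<rho> \<Lambda> Pm \<le> 1/2 + 1 / sqrt 6) \<and>
         (\<exists>\<rho> \<Lambda> Pm. valid_strategy \<rho> \<Lambda> Pm \<and> success \<rho> \<Lambda> Pm = 1/2 + 1 / sqrt 6)"
  using upper_bound valid0 success0 by blast

end
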